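(* Fix a simple spectrum $\lambda_1<\dots<\lambda_n$ and for $\epsilon>0$ let $\mathcal{D}(\epsilon)=\{T\in\mathcal{T}_\Lambda : |T_{n,n-1}|<\epsilon\}$. There exist $\epsilon_q>0$ and $C_q>0$ such that $\mathbf{W}(\mathcal{D}(\epsilon))\subset\mathcal{D}(\epsilon)$ for every $\epsilon\le\epsilon_q$, and $|(\mathbf{W}(T))_{n,n-1}|\le C_q|T_{n,n-1}|^2$ for all $T\in\mathcal{D}(\epsilon_q)$ (at which $\mathbf{W}$ is defined). Furthermore, for any subset $\mathcal{D}_c\subset\mathcal{D}(\epsilon_q)$ whose closure is disjoint from $\mathcal{Y}_0$, there exists $C_c>0$ such that $|(\mathbf{W}(T))_{n,n-1}|\le C_c|T_{n,n-1}|^3$ for all $T\in\mathcal{D}_c$ (at which $\mathbf{W}$ is defined).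
   Context: $\Lambda=\mathrm{diag}(\lambda_1,\dots,\lambda_n)$ and $\mathcal{T}_\Lambda$ is the set of real symmetric tridiagonal $n\times n$ matrices with spectrum $\{\lambda_1,\dots,\lambda_n\}$. For $T\in\mathcal{T}_\Lambda$, $\omega_+(T)\ge\omega_-(T)$ are the eigenvalues of the bottom $2\times2$ principal block of $T$, and Wilkinson's shift $\omega(T)$ is the one of them closest to $T_{n,n}$; it is well defined off $\mathcal{Y}=\{T: T_{n,n}=T_{n-1,n-1}\}$. $\mathcal{Y}_0=\{T\in\mathcal{T}_\Lambda: T_{n,n}=T_{n-1,n-1},\ T_{n,n-1}=0\}$ (the set where $\omega_+=\omega_-$). Wilkinson's step is $\mathbf{W}(T)=Q^*TQ$ where $T-\omega(T)I=QR$ with $Q$ orthogonal and $R$ upper triangular with positive diagonal; it is defined when $T\notin\mathcal{Y}$ and $\omega(T)$ is not an eigenvalue of $T$, and is extended by continuity to matrices with $T_{n,n-1}=0$, $T\notin\mathcal{Y}$ (removable singularities). $\mathbf{W}(T)\in\mathcal{T}_\Lambda$. *)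

theory Defs
  imports "HOL-Analysis.Analysis"
begin

text \<open>Matrices are n x n real matrices indexed by a finite linearly ordered type 'n
  (n = CARD('n)); the order on 'n is the index order 1 < 2 < ... < n.
  Entry (i,j) of T is T $ i $ j (row i, column j).\<close>

definition last_idx :: "'n::{finite,linorder}" where
  "last_idx = (GREATEST i. True)"

definition pen_idx :: "'n::{finite,linorder}" where
  "pen_idx = (GREATEST i. i \<noteq> (last_idx::'n))"

definition adj_idx :: "'n::{finite,linorder} \<Rightarrow> 'n \<Rightarrow> bool" where
  "adj_idx i j \<longleftrightarrow> i < j \<and> \<not> (\<exists>k. i < k \<and> k < j)"

definition tridiagonal :: "real^('n::{finite,linorder})^('n::{finite,linorder}) \<Rightarrow> bool" where
  "tridiagonal T \<longleftrightarrow> transpose T = T \<and>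
     (\<forall>i j. T $ i $ j \<noteq> 0 \<longrightarrow> i = j \<or> adj_idx i j \<or> adj_idx j i)"

definition is_eigenvalue :: "real^('n::{finite,linorder})^('n::{finite,linorder}) \<Rightarrow> real \<Rightarrow> bool" where
  "is_eigenvalue T \<mu> \<longleftrightarrow> (\<exists>v. v \<noteq> 0 \<and> T *v v = \<mu> *\<^sub>R v)"

definition TLam :: "('n::{finite,linorder} \<Rightarrow> real) \<Rightarrow> (real^('n::{finite,linorder})^('n::{finite,linorder})) set" where
  "TLam lam = {T. tridiagonal T \<and> {\<mu>. is_eigenvalue T \<mu>} = range lam}"

definition subd :: "real^('n::{finite,linorder})^('n::{finite,linorder}) \<Rightarrow> real" where
  "subd T = T $ last_idx $ pen_idx"

definition omega_plus :: "real^('n::{finite,linorder})^('n::{finite,linorder}) \<Rightarrow> real" where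
  "omega_plus T = (let a = T $ pen_idx $ pen_idx; c = T $ last_idx $ last_idx; b = subd T
     in (a + c) / 2 + sqrt (((a - c) / 2)^2 + b^2))"

definition omega_minus :: "real^('n::{finite,linorder})^('n::{finite,linorder}) \<Rightarrow> real" where
  "omega_minus T = (let a = T $ pen_idx $ pen_idx; c = T $ last_idx $ last_idx; b = subd T
     in (a + c) / 2 - sqrt (((a - c) / 2)^2 + b^2))"

text \<open>Wilkinson's shift: the eigenvalue of the bottom 2x2 block closest to T_{n,n}
  (well defined off Y).\<close>
definition wilk_shift :: "real^('n::{finite,linorder})^('n::{finite,linorder}) \<Rightarrow> real" where
  "wilk_shift T = (if \<bar>omega_plus T - T $ last_idx $ last_idx\<bar> < \<bar>omega_minus T - T $ last_idx $ last_idx\<bar>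
                   then omega_plus T else omega_minus T)"

definition Yset :: "(real^('n::{finite,linorder})^('n::{finite,linorder})) set" where
  "Yset = {T. T $ last_idx $ last_idx = T $ pen_idx $ pen_idx}"

definition Y0set :: "('n::{finite,linorder} \<Rightarrow> real) \<Rightarrow> (real^('n::{finite,linorder})^('n::{finite,linorder})) set" where
  "Y0set lam = {T \<in> TLam lam. T $ last_idx $ last_idx = T $ pen_idx $ pen_idx \<and> subd T = 0}"

definition upper_triangular :: "real^('n::{finite,linorder})^('n::{finite,linorder}) \<Rightarrow> bool" where
  "upper_triangular R \<longleftrightarrow> (\<forall>i j. j < i \<longrightarrow> R $ i $ j = 0)"

definition wilk_QR_step :: "real^('n::{finite,linorder})^('n::{finite,linorder}) \<Rightarrow> real^('n::{finite,linorder})^('n::{finite,linorder}) \<Rightarrow> bool" where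
  "wilk_QR_step T W' \<longleftrightarrow> (\<exists>Q R. orthogonal_matrix Q \<and> upper_triangular R \<and> (\<forall>i. R $ i $ i > 0) \<and>
      T - wilk_shift T *\<^sub>R mat 1 = Q ** R \<and> W' = transpose Q ** T ** Q)"

definition wilk_fun :: "real^('n::{finite,linorder})^('n::{finite,linorder}) \<Rightarrow> real^('n::{finite,linorder})^('n::{finite,linorder})" where
  "wilk_fun T = (THE W'. wilk_QR_step T W')"

definition W_dom :: "('n::{finite,linorder} \<Rightarrow> real) \<Rightarrow> (real^('n::{finite,linorder})^('n::{finite,linorder})) set" where
  "W_dom lam = {T \<in> TLam lam. T \<notin> Yset \<and> \<not> is_eigenvalue T (wilk_shift T)}"

text \<open>W is defined at T with value W': either T is in the QR domain, or T is a removable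
  singularity (T_{n,n-1} = 0, T not in Y) and W' is the limit of W from the QR domain.\<close>
definition W_defined :: "('n::{finite,linorder} \<Rightarrow> real) \<Rightarrow> real^('n::{finite,linorder})^('n::{finite,linorder}) \<Rightarrow> real^('n::{finite,linorder})^('n::{finite,linorder}) \<Rightarrow> bool" where
  "W_defined lam T W' \<longleftrightarrow>
     (T \<in> W_dom lam \<and> W' = wilk_fun T) \<or>
     (T \<in> TLam lam \<and> subd T = 0 \<and> T \<notin> Yset \<and> T islimpt W_dom lam \<and>
      (wilk_fun \<longlongrightarrow> W') (at T within W_dom lam))"

definition Dset :: "('n::{finite,linorder} \<Rightarrow> real) \<Rightarrow> real \<Rightarrow> (real^('n::{finite,linorder})^('n::{finite,linorder})) set" where
  "Dset lam \<epsilon> = {T \<in> TLam lam. \<bar>subd T\<bar> < \<epsilon>}"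

end

theory Submission
  imports Defs
begin

lemma last_idx_Max: "(last_idx::('n::{finite,linorder})) = Max UNIV"
  unfolding last_idx_def using Greatest_Max[of "\<lambda>_::('n::{finite,linorder}). True"] by simp

lemma le_last_idx[simp]: "(i::('n::{finite,linorder})) \<le> last_idx"
  unfolding last_idx_Max by simp

lemma exists_ne_last:
  assumes "CARD('n::{finite,linorder}) \<ge> 2"
  shows "\<exists>i::('n::{finite,linorder}). i \<noteq> last_idx"
proof (rule ccontr)
  assume "\<not> ?thesis"
  then have "(UNIV::('n::{finite,linorder}) set) = {last_idx}" by auto
  then have "CARD(('n::{finite,linorder})) = Suc 0" by (simp only: card_1_singleton_iff) blast
  with assms show False by simp
qed

lemma pen_idx_Max:
  assumes "CARD('n::{finite,linorder}) \<ge> 2"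
  shows "(pen_idx::('n::{finite,linorder})) = Max {i. i \<noteq> last_idx}"
  unfolding pen_idx_def using Greatest_Max[of "\<lambda>i::('n::{finite,linorder}). i \<noteq> last_idx"] exists_ne_last[OF assms] by simp

lemma pen_ne_last:
  assumes "CARD('n::{finite,linorder}) \<ge> 2"
  shows "(pen_idx::('n::{finite,linorder})) \<noteq> last_idx"
proof -
  have "Max {i::('n::{finite,linorder}). i \<noteq> last_idx} \<in> {i. i \<noteq> last_idx}"
    using exists_ne_last[OF assms] by (intro Max_in) auto
  then show ?thesis using pen_idx_Max[OF assms] by simp
qed

lemma pen_less_last:
  assumes "CARD('n::{finite,linorder}) \<ge> 2"
  shows "(pen_idx::('n::{finite,linorder})) < last_idx"
  using pen_ne_last[OF assms] le_last_idx[of "pen_idx::('n::{finite,linorder})"] by (simp add: order_le_less)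

lemma le_pen_idx:
  assumes "CARD('n::{finite,linorder}) \<ge> 2" "(i::('n::{finite,linorder})) \<noteq> last_idx"
  shows "i \<le> pen_idx"
  unfolding pen_idx_Max[OF assms(1)] using assms(2) by (intro Max_ge) auto

lemma not_between_pen_last:
  assumes "CARD('n::{finite,linorder}) \<ge> 2"
  shows "\<not> ((pen_idx::('n::{finite,linorder})) < k \<and> k < last_idx)"
  using le_pen_idx[OF assms, of k] by (metis leD less_imp_neq)

lemma tridiagonal_sym:
  fixes T :: "real^('n::{finite,linorder})^('n::{finite,linorder})"
  shows "tridiagonal T \<Longrightarrow> T $ i $ j = T $ j $ i"
  unfolding tridiagonal_def by (metis transpose_def vec_lambda_beta)

lemma tridiagonal_last_col:
  assumes "CARD('n::{finite,linorder}) \<ge> 2" "tridiagonal (T::real^('n::{finite,linorder})^('n::{finite,linorder}))"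
    "k \<noteq> last_idx" "k \<noteq> pen_idx"
  shows "T $ k $ last_idx = 0"
proof (rule ccontr)
  assume "T $ k $ last_idx \<noteq> 0"
  then have "k = last_idx \<or> adj_idx k last_idx \<or> adj_idx last_idx k"
    using assms(2) unfolding tridiagonal_def by blast
  moreover have "\<not> adj_idx last_idx k" unfolding adj_idx_def by (simp add: not_less)
  moreover have "\<not> adj_idx k last_idx"
  proof
    assume "adj_idx k last_idx"
    moreover have "k < pen_idx" using le_pen_idx[OF assms(1,3)] assms(4) by simp
    ultimately show False using pen_less_last[OF assms(1)] unfolding adj_idx_def by blast
  qed
  ultimately show False using assms(3) by blast
qed

section \<open>Spectral facts\<close>

lemma mv_sum: "(A::real^'n^'m) *v (\<Sum>i\<in>S. f i) = (\<Sum>i\<in>S. A *v f i)"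
  by (induct S rule: infinite_finite_induct) (simp_all add: matrix_vector_right_distrib)

lemma inner_matrix_sym:
  fixes T :: "real^'n^'n"
  assumes "transpose T = T"
  shows "(T *v x) \<bullet> y = x \<bullet> (T *v y)"
proof -
  have s: "T $ i $ j = T $ j $ i" for i j by (metis assms transpose_def vec_lambda_beta)
  have "(T *v x) \<bullet> y = (\<Sum>i\<in>UNIV. \<Sum>j\<in>UNIV. T $ i $ j * x $ j * y $ i)"
    by (simp add: inner_vec_def matrix_vector_mult_def sum_distrib_right)
  also have "\<dots> = (\<Sum>j\<in>UNIV. \<Sum>i\<in>UNIV. T $ i $ j * x $ j * y $ i)" by (rule sum.swap)
  also have "\<dots> = x \<bullet> (T *v y)"
    by (simp add: inner_vec_def matrix_vector_mult_def sum_distrib_left s mult_ac)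
  finally show ?thesis .
qed

locale eigbasis =
  fixes T :: "real^'n^'n" and lam :: "'n \<Rightarrow> real" and V :: "'n \<Rightarrow> real^'n"
  assumes sym: "transpose T = T" and inj: "inj lam"
    and Vnorm: "\<And>i. norm (V i) = 1" and Veig: "\<And>i. T *v V i = lam i *\<^sub>R V i"
begin

lemma orth: "i \<noteq> j \<Longrightarrow> V i \<bullet> V j = 0"
proof -
  assume "i \<noteq> j"
  have "lam i * (V i \<bullet> V j) = (T *v V i) \<bullet> V j" by (simp add: Veig)
  also have "\<dots> = V i \<bullet> (T *v V j)" by (rule inner_matrix_sym[OF sym])
  also have "\<dots> = lam j * (V i \<bullet> V j)" by (simp add: Veig)
  finally have "(lam i - lam j) * (V i \<bullet> V j) = 0" by (simp add: algebra_simps)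
  moreover have "lam i \<noteq> lam j" using inj \<open>i \<noteq> j\<close> by (auto dest: injD)
  ultimately show ?thesis by simp
qed

lemma inner_VV: "V i \<bullet> V j = (if i = j then 1 else 0)"
  using orth Vnorm by (auto simp: norm_eq_1)

definition "VM = (\<chi> r c. V c $ r)"

lemma VM_orth: "orthogonal_matrix VM"
proof -
  have "transpose VM ** VM = mat 1"
    by (simp add: VM_def matrix_matrix_mult_def transpose_def mat_def vec_eq_iff
         inner_VV[symmetric] inner_vec_def)
  then show ?thesis by (simp add: orthogonal_matrix)
qed

lemma expand: "x = (\<Sum>i\<in>UNIV. (x \<bullet> V i) *\<^sub>R V i)"
proof -
  have "x = (VM ** transpose VM) *v x" using VM_orth by (simp add: orthogonal_matrix_def)
  also have "\<dots> = VM *v (transpose VM *v x)" by (metis matrix_vector_mul_assoc)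
  also have "\<dots> = (\<Sum>i\<in>UNIV. (x \<bullet> V i) *\<^sub>R V i)"
    by (simp add: matrix_mult_sum column_def VM_def transpose_def matrix_vector_mult_def
        inner_vec_def mult.commute scalar_mult_eq_scaleR del: transpose_matrix_vector)
  finally show ?thesis .
qed

lemma coeff: "(\<Sum>i\<in>UNIV. d i *\<^sub>R V i) \<bullet> V j = d j"
  by (simp add: inner_sum_left inner_VV if_distrib cong: if_cong)

lemma norm_sq: "norm x ^ 2 = (\<Sum>i\<in>UNIV. (x \<bullet> V i)^2)"
proof -
  have "norm x ^ 2 = x \<bullet> (\<Sum>i\<in>UNIV. (x \<bullet> V i) *\<^sub>R V i)"
    using expand[of x] by (simp add: power2_norm_eq_inner)
  also have "\<dots> = (\<Sum>i\<in>UNIV. (x \<bullet> V i)^2)"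
    by (simp add: inner_sum_right power2_eq_square)
  finally show ?thesis .
qed

lemma norm_sq_comb: "norm (\<Sum>i\<in>UNIV. d i *\<^sub>R V i) ^ 2 = (\<Sum>i\<in>UNIV. (d i)^2)"
  using norm_sq coeff by simp

lemma shifted_apply: "(T - w *\<^sub>R mat 1) *v x = (\<Sum>i\<in>UNIV. ((x \<bullet> V i) * (lam i - w)) *\<^sub>R V i)"
proof -
  have "T *v x = (\<Sum>i\<in>UNIV. (x \<bullet> V i) *\<^sub>R (lam i *\<^sub>R V i))"
    apply (subst expand[of x])
    by (simp add: mv_sum matrix_vector_mult_scaleR Veig)
  moreover have "w *\<^sub>R x = (\<Sum>i\<in>UNIV. (x \<bullet> V i) *\<^sub>R (w *\<^sub>R V i))"
    apply (subst expand[of x])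
    by (simp add: scaleR_sum_right mult.commute)
  ultimately show ?thesis
    by (simp add: matrix_vector_mult_diff_rdistrib algebra_simps sum_subtractf[symmetric]
         flip: scaleR_matrix_vector_assoc)
qed

lemma shifted_norm_sq: "norm ((T - w *\<^sub>R mat 1) *v x) ^ 2 = (\<Sum>i\<in>UNIV. ((x \<bullet> V i) * (lam i - w))^2)"
  unfolding shifted_apply by (rule norm_sq_comb)

lemma no_other_eig:
  assumes "T *v x = mu *\<^sub>R x" "mu \<notin> range lam"
  shows "x = 0"
proof -
  have "x \<bullet> V i = 0" for i
  proof -
    have "mu * (x \<bullet> V i) = (T *v x) \<bullet> V i" using assms by simp
    also have "\<dots> = x \<bullet> (T *v V i)" by (rule inner_matrix_sym[OF sym])
    also have "\<dots> = lam i * (x \<bullet> V i)" by (simp add: Veig)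
    finally have "(mu - lam i) * (x \<bullet> V i) = 0" by (simp add: algebra_simps)
    moreover have "mu \<noteq> lam i" using assms(2) by auto
    ultimately show ?thesis by simp
  qed
  then show ?thesis using expand[of x] by simp
qed

lemma norm_apply_le:
  assumes "\<And>i. \<bar>lam i\<bar> \<le> M"
  shows "norm (T *v x) \<le> M * norm x"
proof -
  have "T *v x = (T - 0 *\<^sub>R mat 1) *v x" by simp
  then have "norm (T *v x) ^ 2 = (\<Sum>i\<in>UNIV. ((x \<bullet> V i) * lam i)^2)"
    using shifted_norm_sq[of 0 x] by simp
  also have "\<dots> \<le> (\<Sum>i\<in>UNIV. M^2 * (x \<bullet> V i)^2)"
  proof (rule sum_mono)
    fix i
    have "lam i ^ 2 \<le> M^2" using assms[of i] by (metis abs_le_square_iff abs_of_nonneg abs_ge_zero order_trans power2_abs)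
    then show "((x \<bullet> V i) * lam i)^2 \<le> M^2 * (x \<bullet> V i)^2"
      by (simp add: power_mult_distrib mult_right_mono mult.commute)
  qed
  also have "\<dots> = (M * norm x)^2" by (simp add: norm_sq[of x] sum_distrib_left power_mult_distrib)
  finally have "norm (T *v x) ^ 2 \<le> (M * norm x)^2" .
  moreover have "M \<ge> 0" using assms[of undefined] by simp
  ultimately show ?thesis by (simp add: power2_le_iff_abs_le)
qed

end

lemma TLam_eigbasis:
  assumes "T \<in> TLam lam" "inj lam"
  obtains V where "eigbasis T lam V"
proof -
  have "\<forall>i. \<exists>v. norm v = 1 \<and> T *v v = lam i *\<^sub>R v"
  proof
    fix i
    have "is_eigenvalue T (lam i)" using assms(1) unfolding TLam_def by auto
    then obtain v where v: "v \<noteq> 0" "T *v v = lam i *\<^sub>R v" unfolding is_eigenvalue_def by auto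
    show "\<exists>v. norm v = 1 \<and> T *v v = lam i *\<^sub>R v"
      by (rule exI[of _ "v /\<^sub>R norm v"]) (use v in \<open>simp add: matrix_vector_mult_scaleR\<close>)
  qed
  then obtain V where Vp: "\<And>i. norm (V i) = 1 \<and> T *v V i = lam i *\<^sub>R V i" by metis
  moreover have "transpose T = T" using assms(1) unfolding TLam_def tridiagonal_def by auto
  ultimately show ?thesis using assms(2) by (intro that[of V]) (simp add: eigbasis_def)
qed

lemma mv_axis: "((A::real^'n^'m) *v axis i 1) $ k = A $ k $ i"
  by (simp add: matrix_vector_mult_basis column_def)

lemma norm_two_axis: "norm (a *\<^sub>R axis i 1 + b *\<^sub>R axis j (1::real)) \<le> \<bar>a\<bar> + \<bar>b\<bar>"
  by (rule order_trans[OF norm_triangle_ineq]) (simp add: norm_axis_1)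

lemma shift_col_last:
  fixes T :: "real^('n::{finite,linorder})^('n::{finite,linorder})"
  assumes card: "CARD(('n::{finite,linorder})) \<ge> 2" and tri: "tridiagonal T"
  shows "(T - w *\<^sub>R mat 1) *v axis last_idx 1 =
     subd T *\<^sub>R axis pen_idx 1 + (T $ last_idx $ last_idx - w) *\<^sub>R axis last_idx 1"
proof -
  have pl: "pen_idx \<noteq> (last_idx::'n)" using pen_ne_last[OF card] .
  show ?thesis
  proof (subst vec_eq_iff, intro allI)
    fix k :: 'n
    show "((T - w *\<^sub>R mat 1) *v axis last_idx 1) $ k =
      (subd T *\<^sub>R axis pen_idx 1 + (T $ last_idx $ last_idx - w) *\<^sub>R axis last_idx 1) $ k"
      unfolding mv_axis
      using tridiagonal_last_col[OF card tri, of k] tridiagonal_sym[OF tri, of pen_idx last_idx] pl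
      by (cases "k = last_idx"; cases "k = pen_idx")
         (auto simp: axis_def mat_def subd_def)
  qed
qed

lemma sym_shift:
  fixes T :: "real^'n^'n"
  assumes "transpose T = T" shows "transpose (T - w *\<^sub>R mat 1) = T - w *\<^sub>R mat 1"
  using assms by (simp add: transpose_def vec_eq_iff mat_def)

lemma core_bound:
  fixes T :: "real^('n::{finite,linorder})^('n::{finite,linorder})"
  assumes card: "CARD(('n::{finite,linorder})) \<ge> 2" and inj: "inj lam"
    and TL: "T \<in> TLam lam"
    and g: "g > 0" "\<And>i j. i \<noteq> j \<Longrightarrow> g \<le> \<bar>lam i - lam j\<bar>"
    and cw: "\<bar>T $ last_idx $ last_idx - w\<bar> \<le> \<bar>subd T\<bar>"
    and q: "norm q = 1" "(T - w *\<^sub>R mat 1) *v q = r *\<^sub>R axis last_idx 1"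
  shows "norm (q - (q $ last_idx) *\<^sub>R axis last_idx 1) \<le> 8 / g * \<bar>subd T\<bar>"
proof -
  define L where "L = (last_idx::'n)"
  define P where "P = (pen_idx::'n)"
  define b where "b = subd T"
  define S where "S = T - w *\<^sub>R mat 1"
  define t where "t = q $ L"
  define p where "p = q - t *\<^sub>R axis L 1"
  define \<rho> where "\<rho> = norm p"
  have PL: "P \<noteq> L" unfolding P_def L_def using pen_ne_last[OF card] .
  have tri: "tridiagonal T" using TL unfolding TLam_def by auto
  have symT: "transpose T = T" using tri unfolding tridiagonal_def by auto
  have symS: "transpose S = S" unfolding S_def by (rule sym_shift[OF symT])
  obtain V where V: "eigbasis T lam V" using TLam_eigbasis[OF TL inj] by blast
  have pL: "p $ L = 0" unfolding p_def t_def by (simp add: axis_def)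
  have p_orth: "p \<bullet> axis L 1 = 0" using pL by (simp add: inner_axis)
  have qdec: "q = p + t *\<^sub>R axis L 1" unfolding p_def by simp
  have nq: "norm q ^ 2 = \<rho>^2 + t^2"
    unfolding qdec \<rho>_def using p_orth
    by (subst norm_add_Pythagorean) (auto simp: orthogonal_def norm_axis_1)
  then have nq1: "\<rho>^2 + t^2 = 1" using q(1) by simp
  have "\<rho>^2 \<le> 1^2" using nq1 zero_le_power2[of t] unfolding one_power2 by linarith
  moreover have "\<bar>t\<bar>^2 \<le> 1^2" using nq1 zero_le_power2[of \<rho>] unfolding one_power2 power2_abs by linarith
  ultimately have rho_le: "\<rho> \<le> 1" and t_le: "\<bar>t\<bar> \<le> 1"
    by (auto intro: power2_le_imp_le)
  have rho0: "\<rho> \<ge> 0" unfolding \<rho>_def by simp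
  have SeL: "S *v axis L 1 = b *\<^sub>R axis P 1 + (T $ L $ L - w) *\<^sub>R axis L 1"
    unfolding S_def L_def P_def b_def by (rule shift_col_last[OF card tri])
  have nSeL: "norm (S *v axis L 1) \<le> 2 * \<bar>b\<bar>"
    unfolding SeL using norm_two_axis[of b P "T $ L $ L - w" L] cw unfolding L_def b_def by linarith
  have Sp: "S *v p = (- t * b) *\<^sub>R axis P 1 + (b * p $ P) *\<^sub>R axis L 1"
  proof -
    have "S *v p = r *\<^sub>R axis L 1 - t *\<^sub>R (S *v axis L 1)"
      using q(2) unfolding p_def S_def L_def
      by (simp add: matrix_vector_mult_diff_distrib matrix_vector_mult_scaleR)
    also have "\<dots> = (- t * b) *\<^sub>R axis P 1 + (r - t * (T $ L $ L - w)) *\<^sub>R axis L 1"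
      unfolding SeL by (simp add: algebra_simps)
    finally have e: "S *v p = (- t * b) *\<^sub>R axis P 1 + (r - t * (T $ L $ L - w)) *\<^sub>R axis L 1" .
    have "(S *v p) $ L = (S *v p) \<bullet> axis L 1" by (simp add: inner_axis)
    also have "\<dots> = p \<bullet> (S *v axis L 1)" by (rule inner_matrix_sym[OF symS])
    also have "\<dots> = b * p $ P" unfolding SeL using pL by (simp add: inner_add_right inner_axis)
    finally have "(S *v p) $ L = b * p $ P" .
    with e PL have "r - t * (T $ L $ L - w) = b * p $ P" by (simp add: axis_def)
    with e show ?thesis by simp
  qed
  have pP: "\<bar>p $ P\<bar> \<le> \<rho>" unfolding \<rho>_def by (rule component_le_norm_cart)
  have nSp: "norm (S *v p) \<le> 2 * \<bar>b\<bar>"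
  proof -
    have "norm (S *v p) \<le> \<bar>- t * b\<bar> + \<bar>b * p $ P\<bar>" unfolding Sp by (rule norm_two_axis)
    also have "\<dots> \<le> \<bar>b\<bar> + \<bar>b\<bar>"
    proof (rule add_mono)
      show "\<bar>- t * b\<bar> \<le> \<bar>b\<bar>" using t_le by (simp add: abs_mult mult_left_le_one_le)
      show "\<bar>b * p $ P\<bar> \<le> \<bar>b\<bar>" using pP rho_le by (simp add: abs_mult mult_right_le_one_le)
    qed
    finally show ?thesis by simp
  qed
  obtain j where j: "\<And>i. \<bar>lam j - w\<bar> \<le> \<bar>lam i - w\<bar>"
  proof -
    obtain j where "is_arg_min (\<lambda>i. \<bar>lam i - w\<bar>) (\<lambda>x. x \<in> UNIV) j"
      using ex_is_arg_min_if_finite[of UNIV "\<lambda>i. \<bar>lam i - w\<bar>"] by auto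
    then show ?thesis using that[of j] by (auto simp: is_arg_min_linorder)
  qed
  have far: "g / 2 \<le> \<bar>lam i - w\<bar>" if "i \<noteq> j" for i
    using g(2)[OF that] j[of i] by linarith
  have lower: "g / 2 * norm v \<le> norm (S *v v)" if vj: "v \<bullet> V j = 0" for v
  proof -
    have "(g/2 * norm v)^2 = (g/2)^2 * norm v ^ 2" by (rule power_mult_distrib)
    also have "\<dots> = (\<Sum>i\<in>UNIV. (g/2)^2 * (v \<bullet> V i)^2)"
      by (simp only: eigbasis.norm_sq[OF V, of v] sum_distrib_left)
    also have "\<dots> \<le> (\<Sum>i\<in>UNIV. ((v \<bullet> V i) * (lam i - w))^2)"
    proof (rule sum_mono)
      fix i
      show "(g/2)^2 * (v \<bullet> V i)^2 \<le> ((v \<bullet> V i) * (lam i - w))^2"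
      proof (cases "i = j")
        case True then show ?thesis using vj by simp
      next
        case False
        have "(g/2)^2 \<le> (lam i - w)^2"
          using far[OF False] g(1) by (metis abs_ge_zero abs_of_pos half_gt_zero power2_abs power_mono)
        then have "(g/2)^2 * (v \<bullet> V i)^2 \<le> (lam i - w)^2 * (v \<bullet> V i)^2"
          by (rule mult_right_mono) simp
        then show ?thesis unfolding power_mult_distrib by (simp add: mult.commute)
      qed
    qed
    also have "\<dots> = norm (S *v v) ^ 2" unfolding S_def by (rule eigbasis.shifted_norm_sq[OF V, symmetric])
    finally show ?thesis using g(1) by (simp add: power2_le_iff_abs_le)
  qed
  define \<alpha> where "\<alpha> = axis L 1 \<bullet> V j"
  define \<beta> where "\<beta> = - (p \<bullet> V j)"
  define v where "v = \<alpha> *\<^sub>R p + \<beta> *\<^sub>R axis L 1"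
  have vj: "v \<bullet> V j = 0" unfolding v_def \<alpha>_def \<beta>_def by (simp add: inner_add_left algebra_simps)
  have nv2: "norm v ^ 2 = \<alpha>^2 * \<rho>^2 + \<beta>^2"
    unfolding v_def \<rho>_def using p_orth
    by (subst norm_add_Pythagorean) (auto simp: orthogonal_def norm_axis_1 power_mult_distrib)
  have nSv: "norm (S *v v) \<le> 2 * \<bar>b\<bar> * (\<bar>\<alpha>\<bar> + \<bar>\<beta>\<bar>)"
  proof -
    have "S *v v = \<alpha> *\<^sub>R (S *v p) + \<beta> *\<^sub>R (S *v axis L 1)"
      unfolding v_def by (simp add: matrix_vector_right_distrib matrix_vector_mult_scaleR)
    then have "norm (S *v v) \<le> \<bar>\<alpha>\<bar> * norm (S *v p) + \<bar>\<beta>\<bar> * norm (S *v axis L 1)"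
      by (metis norm_scaleR norm_triangle_ineq)
    also have "\<dots> \<le> \<bar>\<alpha>\<bar> * (2 * \<bar>b\<bar>) + \<bar>\<beta>\<bar> * (2 * \<bar>b\<bar>)"
      by (intro add_mono mult_left_mono nSp nSeL) auto
    finally show ?thesis by (simp add: algebra_simps)
  qed
  have nva: "\<bar>\<alpha>\<bar> * \<rho> \<le> norm v"
  proof (rule power2_le_imp_le)
    show "(\<bar>\<alpha>\<bar> * \<rho>)^2 \<le> (norm v)^2" unfolding nv2 power_mult_distrib power2_abs
      using zero_le_power2[of \<beta>] by linarith
  qed simp
  have nvb: "\<bar>\<beta>\<bar> \<le> norm v"
  proof (rule power2_le_imp_le)
    show "\<bar>\<beta>\<bar>^2 \<le> (norm v)^2" unfolding nv2 power2_abs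
      using zero_le_power2[of "\<alpha> * \<rho>"] unfolding power_mult_distrib by linarith
  qed simp
  have key: "g/2 * norm v \<le> 2 * \<bar>b\<bar> * (\<bar>\<alpha>\<bar> + \<bar>\<beta>\<bar>)" using lower[OF vj] nSv by linarith
  have "\<rho> \<le> 8 / g * \<bar>b\<bar>"
  proof (cases "\<alpha> = 0 \<and> \<beta> = 0")
    case True
    then have "p \<bullet> V j = 0" unfolding \<beta>_def by simp
    from lower[OF this] nSp have "g/2 * \<rho> \<le> 2 * \<bar>b\<bar>" unfolding \<rho>_def by linarith
    then show ?thesis using g(1) by (simp add: field_simps)
  next
    case False
    show ?thesis
    proof (cases "\<bar>\<beta>\<bar> \<le> \<bar>\<alpha>\<bar>")
      case True
      with False have a0: "\<bar>\<alpha>\<bar> > 0" by auto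
      have "g/2 * (\<bar>\<alpha>\<bar> * \<rho>) \<le> g/2 * norm v" using nva g(1) by (intro mult_left_mono) auto
      also have "\<dots> \<le> 2 * \<bar>b\<bar> * (\<bar>\<alpha>\<bar> + \<bar>\<beta>\<bar>)" by (rule key)
      also have "\<dots> \<le> 2 * \<bar>b\<bar> * (2 * \<bar>\<alpha>\<bar>)" using True by (intro mult_left_mono) auto
      finally have "g/2 * (\<bar>\<alpha>\<bar> * \<rho>) \<le> 2 * \<bar>b\<bar> * (2 * \<bar>\<alpha>\<bar>)" .
      then have "\<bar>\<alpha>\<bar> * (g/2 * \<rho>) \<le> \<bar>\<alpha>\<bar> * (4 * \<bar>b\<bar>)" by (simp add: algebra_simps)
      then have "g/2 * \<rho> \<le> 4 * \<bar>b\<bar>" using a0 by (simp add: mult_le_cancel_left)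
      then show ?thesis using g(1) by (simp add: field_simps)
    next
      case False
      then have b0: "\<bar>\<beta>\<bar> > 0" by auto
      have "g/2 * \<bar>\<beta>\<bar> \<le> g/2 * norm v" using nvb g(1) by (intro mult_left_mono) auto
      also have "\<dots> \<le> 2 * \<bar>b\<bar> * (\<bar>\<alpha>\<bar> + \<bar>\<beta>\<bar>)" by (rule key)
      also have "\<dots> \<le> 2 * \<bar>b\<bar> * (2 * \<bar>\<beta>\<bar>)" using False by (intro mult_left_mono) auto
      finally have "g/2 * \<bar>\<beta>\<bar> \<le> 2 * \<bar>b\<bar> * (2 * \<bar>\<beta>\<bar>)" .
      then have "\<bar>\<beta>\<bar> * (g/2) \<le> \<bar>\<beta>\<bar> * (4 * \<bar>b\<bar>)" by (simp add: algebra_simps)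
      then have "g/2 \<le> 4 * \<bar>b\<bar>" using b0 by (simp add: mult_le_cancel_left)
      then have "1 \<le> 8 / g * \<bar>b\<bar>" using g(1) by (simp add: field_simps)
      then show ?thesis using rho_le by linarith
    qed
  qed
  then show ?thesis unfolding \<rho>_def p_def t_def L_def b_def .
qed

lemma mat_add_rdistrib: "((A::real^'n^'m) + B) ** C = A ** C + B ** C"
  by (simp add: vec_eq_iff matrix_matrix_mult_def sum.distrib distrib_right)

lemma QR_conj:
  fixes T Q R :: "real^'n^'n"
  assumes "orthogonal_matrix Q" "T - w *\<^sub>R mat 1 = Q ** R"
  shows "transpose Q ** T ** Q = R ** Q + w *\<^sub>R mat 1"
proof -
  have T: "T = Q ** R + w *\<^sub>R mat 1" using assms(2) by (simp add: algebra_simps)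
  have QQ: "transpose Q ** Q = mat 1" using assms(1) by (simp add: orthogonal_matrix_def)
  have "transpose Q ** T ** Q = transpose Q ** (Q ** R) ** Q + transpose Q ** (w *\<^sub>R mat 1) ** Q"
    unfolding T by (simp only: matrix_add_ldistrib mat_add_rdistrib)
  also have "transpose Q ** (Q ** R) ** Q = R ** Q"
    by (simp add: matrix_mul_assoc[symmetric] QQ) (simp add: matrix_mul_assoc QQ)
  also have "transpose Q ** (w *\<^sub>R mat 1) ** Q = w *\<^sub>R mat 1"
    by (simp add: matrix_scalar_ac scalar_matrix_assoc[symmetric] QQ)
  finally show ?thesis .
qed

lemma QR_last_col:
  fixes S Q R :: "real^('n::{finite,linorder})^('n::{finite,linorder})"
  assumes "transpose S = S" "orthogonal_matrix Q" "upper_triangular R" "S = Q ** R"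
  shows "S *v column last_idx Q = R $ last_idx $ last_idx *\<^sub>R axis last_idx 1"
proof -
  have QQ: "transpose Q ** Q = mat 1" using assms(2) by (simp add: orthogonal_matrix_def)
  have "S ** Q = transpose S ** Q" using assms(1) by simp
  also have "\<dots> = transpose R ** (transpose Q ** Q)"
    by (simp add: assms(4) matrix_transpose_mul matrix_mul_assoc)
  also have "\<dots> = transpose R" by (simp add: QQ)
  finally have SQ: "S ** Q = transpose R" .
  have "S *v column last_idx Q = (S ** Q) *v axis last_idx 1"
    by (simp add: matrix_vector_mult_basis[symmetric] matrix_vector_mul_assoc)
  also have "\<dots> = R $ last_idx $ last_idx *\<^sub>R axis last_idx 1"
    unfolding SQ
  proof (subst vec_eq_iff, intro allI)
    fix k :: 'n
    have "k \<noteq> last_idx \<Longrightarrow> R $ last_idx $ k = 0"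
      using assms(3) le_last_idx[of k] unfolding upper_triangular_def by (simp add: order_le_less)
    then show "(transpose R *v axis last_idx 1) $ k = (R $ last_idx $ last_idx *\<^sub>R axis last_idx 1) $ k"
      unfolding mv_axis by (cases "k = last_idx") (auto simp: transpose_def axis_def)
  qed
  finally show ?thesis .
qed

lemma RQ_last_pen:
  fixes Q R :: "real^('n::{finite,linorder})^('n::{finite,linorder})"
  assumes "upper_triangular R"
  shows "(R ** Q) $ last_idx $ j = R $ last_idx $ last_idx * Q $ last_idx $ j"
proof -
  have "k \<noteq> last_idx \<Longrightarrow> R $ last_idx $ k = 0" for k
    using assms le_last_idx[of k] unfolding upper_triangular_def by (simp add: order_le_less)
  then have "(\<Sum>k\<in>UNIV. R $ last_idx $ k * Q $ k $ j) = (\<Sum>k\<in>UNIV. if k = last_idx then R $ last_idx $ k * Q $ k $ j else 0)"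
    by (intro sum.cong) auto
  then have "(R ** Q) $ last_idx $ j = (\<Sum>k\<in>UNIV. if k = last_idx then R $ last_idx $ k * Q $ k $ j else 0)"
    unfolding matrix_matrix_mult_def by simp
  then show ?thesis by simp
qed

lemma row_entry_bound:
  fixes Q :: "real^('n::{finite,linorder})^('n::{finite,linorder})"
  assumes "orthogonal_matrix Q" "j \<noteq> i"
  shows "(Q $ i $ j)^2 \<le> 1 - (Q $ i $ i)^2"
proof -
  have "norm (row i Q) = 1" using assms(1) orthogonal_matrix_orthonormal_rows by blast
  then have s: "(\<Sum>k\<in>UNIV. (Q $ i $ k)^2) = 1"
    by (simp add: norm_eq_1 inner_vec_def row_def power2_eq_square)
  have "(\<Sum>k\<in>{i, j}. (Q $ i $ k)^2) \<le> (\<Sum>k\<in>UNIV. (Q $ i $ k)^2)"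
    by (rule sum_mono2) auto
  then show ?thesis using s assms(2) by simp
qed

lemma norm_drop_last_sq:
  fixes q :: "real^'n"
  shows "norm (q - (q $ i) *\<^sub>R axis i 1)^2 = norm q ^ 2 - (q $ i)^2"
proof -
  have o: "orthogonal (q - (q $ i) *\<^sub>R axis i 1) ((q $ i) *\<^sub>R axis i 1)"
    unfolding orthogonal_def by (simp add: inner_diff_left inner_axis)
  have "q = (q - (q $ i) *\<^sub>R axis i 1) + (q $ i) *\<^sub>R axis i 1" by simp
  then have "norm q ^ 2 = norm (q - (q $ i) *\<^sub>R axis i 1)^2 + norm ((q $ i) *\<^sub>R axis i (1::real))^2"
    using norm_add_Pythagorean[OF o] by metis
  then show ?thesis by simp
qed

lemma step_bound:
  fixes T Q R :: "real^('n::{finite,linorder})^('n::{finite,linorder})"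
  assumes card: "CARD(('n::{finite,linorder})) \<ge> 2" and inj: "inj lam"
    and TL: "T \<in> TLam lam"
    and g: "g > 0" "\<And>i j. i \<noteq> j \<Longrightarrow> g \<le> \<bar>lam i - lam j\<bar>"
    and cw: "\<bar>T $ last_idx $ last_idx - w\<bar> \<le> \<bar>subd T\<bar>"
    and Q: "orthogonal_matrix Q" and R: "upper_triangular R" and QR: "T - w *\<^sub>R mat 1 = Q ** R"
  shows "\<bar>subd (transpose Q ** T ** Q)\<bar> \<le>
     8 / g * \<bar>subd T\<bar> * (\<bar>subd T\<bar> * (8 / g * \<bar>subd T\<bar>) + \<bar>T $ last_idx $ last_idx - w\<bar>)"
proof -
  define L where "L = (last_idx::'n)"
  define P where "P = (pen_idx::'n)"
  define b where "b = subd T"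
  define S where "S = T - w *\<^sub>R mat 1"
  define q where "q = column L Q"
  define \<rho> where "\<rho> = norm (q - (q $ L) *\<^sub>R axis L 1)"
  define K where "K = 8 / g * \<bar>b\<bar>"
  have PL: "P \<noteq> L" unfolding P_def L_def using pen_ne_last[OF card] .
  have tri: "tridiagonal T" using TL unfolding TLam_def by auto
  have symT: "transpose T = T" using tri unfolding tridiagonal_def by auto
  have symS: "transpose S = S" unfolding S_def by (rule sym_shift[OF symT])
  have nq: "norm q = 1" unfolding q_def using Q orthogonal_matrix_orthonormal_columns by blast
  have Sq: "S *v q = R $ L $ L *\<^sub>R axis L 1"
    unfolding q_def L_def by (rule QR_last_col[OF symS Q R]) (simp add: S_def QR)
  have Sq': "(T - w *\<^sub>R mat 1) *v q = R $ L $ L *\<^sub>R axis last_idx 1"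
    using Sq unfolding S_def L_def .
  have rho: "\<rho> \<le> K" unfolding \<rho>_def K_def b_def L_def
    by (rule core_bound[OF card inj TL g cw nq Sq'])
  have rho0: "0 \<le> \<rho>" unfolding \<rho>_def by simp
  have rho2: "\<rho>^2 = 1 - (q $ L)^2" unfolding \<rho>_def norm_drop_last_sq nq by simp
  have W: "transpose Q ** T ** Q = R ** Q + w *\<^sub>R mat 1" by (rule QR_conj[OF Q QR])
  have sW: "subd (transpose Q ** T ** Q) = R $ L $ L * Q $ L $ P"
    unfolding W subd_def using RQ_last_pen[OF R, of Q] PL
    by (simp add: mat_def L_def P_def)
  have QLP: "\<bar>Q $ L $ P\<bar> \<le> \<rho>"
  proof (rule power2_le_imp_le)
    show "\<bar>Q $ L $ P\<bar>^2 \<le> \<rho>^2" unfolding rho2 power2_abs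
      using row_entry_bound[OF Q PL] by (simp add: q_def column_def)
  qed (rule rho0)
  have RLL: "R $ L $ L = b * q $ P + (T $ L $ L - w) * q $ L"
  proof -
    have "R $ L $ L = (S *v q) \<bullet> axis L 1" unfolding Sq by (simp add: inner_axis)
    also have "\<dots> = q \<bullet> (S *v axis L 1)" by (rule inner_matrix_sym[OF symS])
    also have "\<dots> = b * q $ P + (T $ L $ L - w) * q $ L"
      unfolding S_def L_def P_def b_def shift_col_last[OF card tri]
      by (simp add: inner_add_right inner_axis mult.commute)
    finally show ?thesis .
  qed
  have qP: "\<bar>q $ P\<bar> \<le> \<rho>"
  proof -
    have "q $ P = (q - (q $ L) *\<^sub>R axis L 1) $ P" using PL by (simp add: axis_def)
    then show ?thesis unfolding \<rho>_def by (metis component_le_norm_cart)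
  qed
  have qL: "\<bar>q $ L\<bar> \<le> 1" using nq component_le_norm_cart[of q L] by simp
  have "\<bar>R $ L $ L\<bar> \<le> \<bar>b\<bar> * \<rho> + \<bar>T $ L $ L - w\<bar>"
  proof -
    have "\<bar>R $ L $ L\<bar> \<le> \<bar>b * q $ P\<bar> + \<bar>(T $ L $ L - w) * q $ L\<bar>" unfolding RLL by (rule abs_triangle_ineq)
    also have "\<dots> \<le> \<bar>b\<bar> * \<rho> + \<bar>T $ L $ L - w\<bar>"
    proof (rule add_mono)
      show "\<bar>b * q $ P\<bar> \<le> \<bar>b\<bar> * \<rho>" unfolding abs_mult by (rule mult_left_mono[OF qP]) simp
      show "\<bar>(T $ L $ L - w) * q $ L\<bar> \<le> \<bar>T $ L $ L - w\<bar>" unfolding abs_mult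
        using qL by (simp add: mult_right_le_one_le)
    qed
    finally show ?thesis .
  qed
  then have "\<bar>subd (transpose Q ** T ** Q)\<bar> \<le> (\<bar>b\<bar> * \<rho> + \<bar>T $ L $ L - w\<bar>) * \<rho>"
    unfolding sW abs_mult using rho0 by (intro mult_mono[OF _ QLP]) auto
  also have "\<dots> \<le> (\<bar>b\<bar> * K + \<bar>T $ L $ L - w\<bar>) * K"
    using rho rho0 by (intro mult_mono add_mono mult_left_mono) auto
  finally show ?thesis unfolding K_def b_def L_def by (simp add: mult.commute)
qed

lemma wshift_real:
  fixes a b c :: real
  defines "s \<equiv> sqrt (((a - c) / 2)^2 + b^2)"
  defines "wp \<equiv> (a + c) / 2 + s" and "wm \<equiv> (a + c) / 2 - s"
  defines "w \<equiv> (if \<bar>wp - c\<bar> < \<bar>wm - c\<bar> then wp else wm)"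
  shows "\<bar>c - w\<bar> \<le> \<bar>b\<bar>" "(a - w) * (c - w) = b^2"
proof -
  define d where "d = (a - c) / 2"
  have s2: "s^2 = d^2 + b^2" unfolding s_def d_def by simp
  have e1: "wp - c = d + s" and e2: "wm - c = d - s" and e3: "a - wp = d - s" and e4: "a - wm = d + s"
    and e5: "c - wp = -d - s" and e6: "c - wm = s - d"
    unfolding wp_def wm_def d_def by (simp_all add: field_simps)
  have p1: "(wp - c) * (wm - c) = -(b^2)"
    unfolding e1 e2 using s2 by (simp add: algebra_simps power2_eq_square)
  have "\<bar>w - c\<bar> ^ 2 \<le> \<bar>wp - c\<bar> * \<bar>wm - c\<bar>"
  proof (cases "\<bar>wp - c\<bar> < \<bar>wm - c\<bar>")
    case True
    then have "\<bar>w - c\<bar> = \<bar>wp - c\<bar>" by (simp add: w_def)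
    then show ?thesis using True by (metis abs_ge_zero less_imp_le mult_left_mono power2_eq_square)
  next
    case False
    then have "\<bar>w - c\<bar> = \<bar>wm - c\<bar>" by (simp add: w_def)
    then show ?thesis using False by (metis abs_ge_zero not_less mult_right_mono power2_eq_square)
  qed
  also have "\<dots> = b^2" using p1 by (metis abs_minus_cancel abs_mult abs_power2 power2_abs)
  finally have "\<bar>w - c\<bar>^2 \<le> \<bar>b\<bar>^2" by simp
  then show "\<bar>c - w\<bar> \<le> \<bar>b\<bar>" by (metis abs_ge_zero abs_minus_commute power2_le_imp_le)
  have "(a - wp) * (c - wp) = b^2" "(a - wm) * (c - wm) = b^2"
    unfolding e3 e4 e5 e6 using s2 by (simp_all add: algebra_simps power2_eq_square)
  then show "(a - w) * (c - w) = b^2" unfolding w_def by simp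
qed

lemma wilk_shift_props:
  fixes T :: "real^('n::{finite,linorder})^('n::{finite,linorder})"
  shows "\<bar>T $ last_idx $ last_idx - wilk_shift T\<bar> \<le> \<bar>subd T\<bar>"
    "(T $ pen_idx $ pen_idx - wilk_shift T) * (T $ last_idx $ last_idx - wilk_shift T) = (subd T)^2"
  using wshift_real[where a="T $ pen_idx $ pen_idx" and b="subd T" and c="T $ last_idx $ last_idx"]
  unfolding wilk_shift_def omega_plus_def omega_minus_def Let_def by simp_all

section \<open>The QR step stays in TLam\<close>

lemma between_trans: "(j::'a::linorder) < m \<Longrightarrow> m < k \<Longrightarrow> l < j \<Longrightarrow> l < j \<and> j < k" by simp

lemma Q_hessenberg:
  fixes T Q R :: "real^('n::{finite,linorder})^('n::{finite,linorder})"
  assumes tri: "tridiagonal T" and R: "upper_triangular R" "\<And>i. R $ i $ i > 0"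
    and QR: "T - w *\<^sub>R mat 1 = Q ** R"
  shows "j < m \<Longrightarrow> m < k \<Longrightarrow> Q $ k $ j = 0"
proof (rule ccontr)
  define B where "B = {j. \<exists>m k. j < m \<and> m < k \<and> Q $ k $ j \<noteq> 0}"
  assume "j < m" "m < k" "Q $ k $ j \<noteq> 0"
  then have "j \<in> B" unfolding B_def by blast
  then have "B \<noteq> {}" by blast
  define j0 where "j0 = Min B"
  have j0B: "j0 \<in> B" unfolding j0_def using \<open>B \<noteq> {}\<close> by (intro Min_in) auto
  have j0min: "\<And>l. l \<in> B \<Longrightarrow> j0 \<le> l" unfolding j0_def by (intro Min_le) auto
  obtain m0 k0 where mk: "j0 < m0" "m0 < k0" "Q $ k0 $ j0 \<noteq> 0" using j0B unfolding B_def by blast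
  have Tk: "T $ k0 $ j0 = 0"
  proof (rule ccontr)
    assume "T $ k0 $ j0 \<noteq> 0"
    then have "k0 = j0 \<or> adj_idx k0 j0 \<or> adj_idx j0 k0" using tri unfolding tridiagonal_def by blast
    then show False using mk unfolding adj_idx_def by auto
  qed
  have "(Q ** R) $ k0 $ j0 = (\<Sum>l\<in>UNIV. Q $ k0 $ l * R $ l $ j0)"
    by (simp add: matrix_matrix_mult_def)
  also have "\<dots> = (\<Sum>l\<in>UNIV. if l = j0 then Q $ k0 $ j0 * R $ j0 $ j0 else 0)"
  proof (intro sum.cong refl)
    fix l
    show "Q $ k0 $ l * R $ l $ j0 = (if l = j0 then Q $ k0 $ j0 * R $ j0 $ j0 else 0)"
    proof (cases "l < j0")
      case True
      then have "l \<notin> B" using j0min by force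
      moreover have "l < j0 \<and> j0 < k0" using True mk by auto
      ultimately have "Q $ k0 $ l = 0" unfolding B_def by blast
      then show ?thesis using True by simp
    next
      case False
      show ?thesis
      proof (cases "l = j0")
        case False
        with \<open>\<not> l < j0\<close> have "j0 < l" by simp
        then have "R $ l $ j0 = 0" using R(1) unfolding upper_triangular_def by blast
        then show ?thesis using False by simp
      qed simp
    qed
  qed
  also have "\<dots> = Q $ k0 $ j0 * R $ j0 $ j0" by simp
  finally have "(Q ** R) $ k0 $ j0 = Q $ k0 $ j0 * R $ j0 $ j0" .
  moreover have "(Q ** R) $ k0 $ j0 = 0"
    unfolding QR[symmetric] using Tk mk by (simp add: mat_def)
  ultimately show False using mk(3) R(2)[of j0] by simp
qed

lemma W_in_TLam:
  fixes T Q R :: "real^('n::{finite,linorder})^('n::{finite,linorder})"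
  assumes TL: "T \<in> TLam lam" and Q: "orthogonal_matrix Q"
    and R: "upper_triangular R" "\<And>i. R $ i $ i > 0"
    and QR: "T - w *\<^sub>R mat 1 = Q ** R"
  shows "transpose Q ** T ** Q \<in> TLam lam"
proof -
  define W where "W = transpose Q ** T ** Q"
  have tri: "tridiagonal T" using TL unfolding TLam_def by auto
  have symT: "transpose T = T" using tri unfolding tridiagonal_def by auto
  have QQ: "transpose Q ** Q = mat 1" "Q ** transpose Q = mat 1" using Q by (auto simp: orthogonal_matrix_def)
  have WRQ: "W = R ** Q + w *\<^sub>R mat 1" unfolding W_def by (rule QR_conj[OF Q QR])
  have symW: "transpose W = W" unfolding W_def
    by (simp add: matrix_transpose_mul symT matrix_mul_assoc)
  have low: "W $ i $ j = 0" if "j < m" "m < i" for i j m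
  proof -
    have "(R ** Q) $ i $ j = (\<Sum>k\<in>UNIV. R $ i $ k * Q $ k $ j)"
      by (simp add: matrix_matrix_mult_def)
    also have "\<dots> = 0"
    proof (intro sum.neutral ballI)
      fix k
      show "R $ i $ k * Q $ k $ j = 0"
      proof (cases "k < i")
        case True then show ?thesis using R(1) unfolding upper_triangular_def by simp
      next
        case False
        then have "m < k" using that by auto
        then show ?thesis using Q_hessenberg[OF tri R QR that(1)] by simp
      qed
    qed
    finally have "(R ** Q) $ i $ j = 0" .
    moreover have "i \<noteq> j" using that by auto
    ultimately show ?thesis unfolding WRQ by (simp add: mat_def)
  qed
  have triW: "tridiagonal W"
    unfolding tridiagonal_def
  proof (intro conjI symW allI impI)
    fix i j assume nz: "W $ i $ j \<noteq> 0"
    show "i = j \<or> adj_idx i j \<or> adj_idx j i"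
    proof (rule ccontr)
      assume "\<not> ?thesis"
      then have "i \<noteq> j" "\<not> adj_idx i j" "\<not> adj_idx j i" by auto
      show False
      proof (cases "i < j")
        case True
        then obtain m where "i < m" "m < j" using \<open>\<not> adj_idx i j\<close> unfolding adj_idx_def by auto
        then have "W $ j $ i = 0" by (rule low)
        moreover have "W $ i $ j = W $ j $ i" using symW by (metis transpose_def vec_lambda_beta)
        ultimately show False using nz by simp
      next
        case False
        then have "j < i" using \<open>i \<noteq> j\<close> by auto
        then obtain m where "j < m" "m < i" using \<open>\<not> adj_idx j i\<close> unfolding adj_idx_def by auto
        then show False using low nz by blast
      qed
    qed
  qed
  have TQ: "T ** Q = Q ** W"
    unfolding W_def by (metis QQ(2) matrix_mul_assoc matrix_mul_lid)
  have eig: "is_eigenvalue W mu \<longleftrightarrow> is_eigenvalue T mu" for mu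
  proof
    assume "is_eigenvalue W mu"
    then obtain v where v: "v \<noteq> 0" "W *v v = mu *\<^sub>R v" unfolding is_eigenvalue_def by auto
    have "T *v (Q *v v) = (T ** Q) *v v" by (simp add: matrix_vector_mul_assoc)
    also have "\<dots> = Q *v (W *v v)" unfolding TQ by (simp add: matrix_vector_mul_assoc)
    also have "\<dots> = mu *\<^sub>R (Q *v v)" by (simp add: v matrix_vector_mult_scaleR)
    finally have "T *v (Q *v v) = mu *\<^sub>R (Q *v v)" .
    moreover have "Q *v v \<noteq> 0"
    proof
      assume "Q *v v = 0"
      then have "transpose Q *v (Q *v v) = 0" by simp
      then show False using v(1) by (simp add: matrix_vector_mul_assoc QQ del: transpose_matrix_vector)
    qed
    ultimately show "is_eigenvalue T mu" unfolding is_eigenvalue_def by blast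
  next
    assume "is_eigenvalue T mu"
    then obtain u where u: "u \<noteq> 0" "T *v u = mu *\<^sub>R u" unfolding is_eigenvalue_def by auto
    have "W *v (transpose Q *v u) = transpose Q *v (T *v u)"
    proof -
      have "transpose Q ** T ** Q ** transpose Q = transpose Q ** T"
        by (metis QQ(2) matrix_mul_assoc matrix_mul_rid)
      then show ?thesis unfolding W_def
        by (metis matrix_vector_mul_assoc)
    qed
    then have "W *v (transpose Q *v u) = mu *\<^sub>R (transpose Q *v u)"
      by (simp add: u matrix_vector_mult_scaleR del: transpose_matrix_vector)
    moreover have "transpose Q *v u \<noteq> 0"
    proof
      assume "transpose Q *v u = 0"
      then have "Q *v (transpose Q *v u) = 0" by simp
      then show False using u(1) by (simp add: matrix_vector_mul_assoc QQ del: transpose_matrix_vector)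
    qed
    ultimately show "is_eigenvalue W mu" unfolding is_eigenvalue_def by blast
  qed
  show ?thesis using TL triW eig unfolding TLam_def W_def by auto
qed

section \<open>QR decomposition: existence (Gram-Schmidt) and uniqueness\<close>

lemma column_mult: "column j ((A::real^'n^'m) ** B) = (\<Sum>i\<in>UNIV. (B $ i $ j) *\<^sub>R column i A)"
  by (simp add: vec_eq_iff column_def matrix_matrix_mult_def sum_component mult.commute)

lemma sum_upper_split:
  fixes R :: "real^('n::{finite,linorder})^('n::{finite,linorder})" and f :: "'n \<Rightarrow> real^'m"
  assumes "upper_triangular R"
  shows "(\<Sum>i\<in>UNIV. R $ i $ j *\<^sub>R f i) = (\<Sum>i\<in>{i. i < j}. R $ i $ j *\<^sub>R f i) + R $ j $ j *\<^sub>R f j"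
proof -
  have "(\<Sum>i\<in>UNIV. R $ i $ j *\<^sub>R f i) = (\<Sum>i\<in>insert j {i. i < j}. R $ i $ j *\<^sub>R f i)"
  proof (rule sum.mono_neutral_right)
    show "\<forall>i\<in>UNIV - insert j {i. i < j}. R $ i $ j *\<^sub>R f i = 0"
      using assms unfolding upper_triangular_def by (auto simp: not_less order_le_less)
  qed auto
  also have "\<dots> = R $ j $ j *\<^sub>R f j + (\<Sum>i\<in>{i. i < j}. R $ i $ j *\<^sub>R f i)"
    by (subst sum.insert) auto
  finally show ?thesis by simp
qed

lemma QR_unique:
  fixes S Q1 R1 Q2 R2 :: "real^('n::{finite,linorder})^('n::{finite,linorder})"
  assumes Q1: "orthogonal_matrix Q1" and R1: "upper_triangular R1" "\<And>i. R1 $ i $ i > 0" and S1: "S = Q1 ** R1"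
    and Q2: "orthogonal_matrix Q2" and R2: "upper_triangular R2" "\<And>i. R2 $ i $ i > 0" and S2: "S = Q2 ** R2"
  shows "Q1 = Q2"
proof (rule ccontr)
  assume ne: "Q1 \<noteq> Q2"
  define B where "B = {j. column j Q1 \<noteq> column j Q2}"
  have "B \<noteq> {}"
  proof
    assume "B = {}"
    then have "\<And>j. column j Q1 = column j Q2" unfolding B_def by auto
    then have "Q1 = Q2" by (simp add: vec_eq_iff column_def)
    with ne show False by simp
  qed
  define j0 where "j0 = Min B"
  have j0B: "j0 \<in> B" unfolding j0_def using \<open>B \<noteq> {}\<close> by (intro Min_in) auto
  have j0min: "column l Q1 = column l Q2" if "l < j0" for l
  proof (rule ccontr)
    assume "column l Q1 \<noteq> column l Q2"
    then have "l \<in> B" by (simp add: B_def)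
    then have "j0 \<le> l" unfolding j0_def by (intro Min_le) auto
    with that show False by simp
  qed
  have on1: "column i Q1 \<bullet> column k Q1 = (if i = k then 1 else 0)" for i k
    using Q1 unfolding orthogonal_matrix_orthonormal_columns by (auto simp: orthogonal_def norm_eq_1)
  have on2: "column i Q2 \<bullet> column k Q2 = (if i = k then 1 else 0)" for i k
    using Q2 unfolding orthogonal_matrix_orthonormal_columns by (auto simp: orthogonal_def norm_eq_1)
  have c1: "column j S = (\<Sum>i\<in>UNIV. R1 $ i $ j *\<^sub>R column i Q1)" for j unfolding S1 column_mult ..
  have c2: "column j S = (\<Sum>i\<in>UNIV. R2 $ i $ j *\<^sub>R column i Q2)" for j unfolding S2 column_mult ..
  have r1: "R1 $ i $ j = column i Q1 \<bullet> column j S" for i j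
    unfolding c1 by (simp add: inner_sum_right on1 if_distrib cong: if_cong)
  have r2: "R2 $ i $ j = column i Q2 \<bullet> column j S" for i j
    unfolding c2 by (simp add: inner_sum_right on2 if_distrib cong: if_cong)
  have eqR: "R1 $ i $ j0 = R2 $ i $ j0" if "i < j0" for i
    using r1 r2 j0min[OF that] by simp
  have "R1 $ j0 $ j0 *\<^sub>R column j0 Q1 = column j0 S - (\<Sum>i\<in>{i. i < j0}. R1 $ i $ j0 *\<^sub>R column i Q1)"
    unfolding c1 sum_upper_split[OF R1(1)] by simp
  also have "\<dots> = column j0 S - (\<Sum>i\<in>{i. i < j0}. R2 $ i $ j0 *\<^sub>R column i Q2)"
    using eqR j0min by (intro arg_cong2[where f="(-)"] refl sum.cong) auto
  also have "\<dots> = R2 $ j0 $ j0 *\<^sub>R column j0 Q2"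
    unfolding c2[of j0] sum_upper_split[OF R2(1)] by simp
  finally have u: "R1 $ j0 $ j0 *\<^sub>R column j0 Q1 = R2 $ j0 $ j0 *\<^sub>R column j0 Q2" .
  have n1: "norm (column j0 Q1) = 1" "norm (column j0 Q2) = 1"
    using Q1 Q2 orthogonal_matrix_orthonormal_columns by blast+
  have "R1 $ j0 $ j0 = R2 $ j0 $ j0"
    using arg_cong[OF u, of norm] n1 R1(2)[of j0] R2(2)[of j0] by simp
  with u R1(2)[of j0] have "column j0 Q1 = column j0 Q2" by simp
  with j0B show False unfolding B_def by simp
qed

lemma gram_schmidt_induct:
  fixes S :: "real^('n::{finite,linorder})^('n::{finite,linorder})"
  assumes inv: "\<And>x. S *v x = 0 \<Longrightarrow> x = 0" and fin: "finite A"
  shows "\<exists>q Rf C. (\<forall>i\<in>A. \<forall>j\<in>A. q i \<bullet> q j = (if i = j then 1 else 0)) \<and>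
     (\<forall>j\<in>A. column j S = (\<Sum>i\<in>{i\<in>A. i \<le> j}. Rf i j *\<^sub>R q i)) \<and> (\<forall>j\<in>A. Rf j j > (0::real)) \<and>
     (\<forall>i\<in>A. q i = (\<Sum>l\<in>A. C l i *\<^sub>R column l S))"
  using fin
proof (induct A rule: finite_linorder_max_induct)
  case empty show ?case by simp
next
  case (insert b A)
  define s where "s = (\<lambda>j. column j S)"
  obtain q Rf C where
    on: "\<forall>i\<in>A. \<forall>j\<in>A. q i \<bullet> q j = (if i = j then 1 else 0)" and
    cols: "\<forall>j\<in>A. s j = (\<Sum>i\<in>{i\<in>A. i \<le> j}. Rf i j *\<^sub>R q i)" and
    pos: "\<forall>j\<in>A. Rf j j > (0::real)" and
    Cq: "\<forall>i\<in>A. q i = (\<Sum>l\<in>A. C l i *\<^sub>R s l)"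
    using insert.hyps(3) unfolding s_def by blast
  have finA: "finite A" by (rule insert.hyps(1))
  have bA: "b \<notin> A" using insert.hyps(2) by auto
  define d where "d = (\<lambda>l. \<Sum>i\<in>A. (s b \<bullet> q i) * C l i)"
  have qexp: "(\<Sum>i\<in>A. (s b \<bullet> q i) *\<^sub>R q i) = (\<Sum>l\<in>A. d l *\<^sub>R s l)"
  proof -
    have "(\<Sum>i\<in>A. (s b \<bullet> q i) *\<^sub>R q i) = (\<Sum>i\<in>A. (s b \<bullet> q i) *\<^sub>R (\<Sum>l\<in>A. C l i *\<^sub>R s l))"
      using Cq by (intro sum.cong) auto
    also have "\<dots> = (\<Sum>i\<in>A. \<Sum>l\<in>A. ((s b \<bullet> q i) * C l i) *\<^sub>R s l)"
      by (simp add: scaleR_sum_right)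
    also have "\<dots> = (\<Sum>l\<in>A. \<Sum>i\<in>A. ((s b \<bullet> q i) * C l i) *\<^sub>R s l)" by (rule sum.swap)
    also have "\<dots> = (\<Sum>l\<in>A. d l *\<^sub>R s l)" by (simp add: d_def scaleR_sum_left)
    finally show ?thesis .
  qed
  define w where "w = s b - (\<Sum>i\<in>A. (s b \<bullet> q i) *\<^sub>R q i)"
  have w0: "w \<noteq> 0"
  proof
    assume "w = 0"
    then have sb: "s b = (\<Sum>l\<in>A. d l *\<^sub>R s l)" unfolding w_def qexp by simp
    define x where "x = axis b 1 - (\<Sum>l\<in>A. d l *\<^sub>R axis l (1::real))"
    have "S *v x = s b - (\<Sum>l\<in>A. d l *\<^sub>R s l)"
      unfolding x_def s_def
      by (simp add: matrix_vector_mult_diff_distrib mv_sum matrix_vector_mult_scaleR matrix_vector_mult_basis)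
    then have "S *v x = 0" using sb by simp
    then have "x = 0" by (rule inv)
    moreover have "x $ b = 1" unfolding x_def using bA by (auto simp: sum_component axis_def intro!: sum.neutral)
    ultimately show False by simp
  qed
  have nw: "norm w > 0" using w0 by simp
  have wq: "w \<bullet> q j = 0" if "j \<in> A" for j
  proof -
    have "(\<Sum>i\<in>A. (s b \<bullet> q i) *\<^sub>R q i) \<bullet> q j = (\<Sum>i\<in>A. (s b \<bullet> q i) * (if i = j then 1 else 0))"
      using on that by (simp add: inner_sum_left)
    also have "\<dots> = s b \<bullet> q j" using that finA by (simp add: if_distrib cong: if_cong)
    finally show ?thesis unfolding w_def by (simp add: inner_diff_left)
  qed
  define q' where "q' = q(b := w /\<^sub>R norm w)"
  define Rf' where "Rf' = (\<lambda>i j. if j = b then (if i = b then norm w else s b \<bullet> q i) else Rf i j)"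
  define C' where "C' = (\<lambda>l i. if i = b then (if l = b then 1 / norm w else - d l / norm w)
                          else (if l = b then 0 else C l i))"
  have q'A: "q' i = q i" if "i \<in> A" for i using that bA unfolding q'_def by auto
  have q'b: "q' b = w /\<^sub>R norm w" unfolding q'_def by simp
  show ?case
  proof (rule exI[of _ q'], rule exI[of _ Rf'], rule exI[of _ C'], intro conjI ballI)
    fix i j assume i: "i \<in> insert b A" and j: "j \<in> insert b A"
    show "q' i \<bullet> q' j = (if i = j then 1 else 0)"
    proof (cases "i = b"; cases "j = b")
      assume "i = b" "j = b"
      then show ?thesis using q'b nw by (simp add: dot_square_norm power2_eq_square)
    next
      assume "i = b" "j \<noteq> b"
      then have "j \<in> A" using j by auto
      then show ?thesis using q'b q'A wq \<open>i = b\<close> \<open>j \<noteq> b\<close> by simp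
    next
      assume "i \<noteq> b" "j = b"
      then have "i \<in> A" using i by auto
      then show ?thesis using q'b q'A wq \<open>i \<noteq> b\<close> \<open>j = b\<close> by (simp add: inner_commute)
    next
      assume "i \<noteq> b" "j \<noteq> b"
      then show ?thesis using i j on q'A by auto
    qed
  next
    fix j assume j: "j \<in> insert b A"
    show "column j S = (\<Sum>i\<in>{i \<in> insert b A. i \<le> j}. Rf' i j *\<^sub>R q' i)"
    proof (cases "j = b")
      case True
      have set: "{i \<in> insert b A. i \<le> b} = insert b A" using insert.hyps(2) by auto
      have "(\<Sum>i\<in>{i \<in> insert b A. i \<le> j}. Rf' i j *\<^sub>R q' i) =
            Rf' b b *\<^sub>R q' b + (\<Sum>i\<in>A. Rf' i b *\<^sub>R q' i)"
        unfolding True set using finA bA by simp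
      also have "\<dots> = w + (\<Sum>i\<in>A. (s b \<bullet> q i) *\<^sub>R q i)"
        using q'A bA nw by (auto simp: Rf'_def q'b intro!: sum.cong)
      also have "\<dots> = s b" unfolding w_def by simp
      finally show ?thesis unfolding True s_def by simp
    next
      case False
      then have jA: "j \<in> A" using j by auto
      have set: "{i \<in> insert b A. i \<le> j} = {i \<in> A. i \<le> j}" using jA insert.hyps(2) by force
      have "(\<Sum>i\<in>{i \<in> insert b A. i \<le> j}. Rf' i j *\<^sub>R q' i) = (\<Sum>i\<in>{i\<in>A. i \<le> j}. Rf i j *\<^sub>R q i)"
        unfolding set using False q'A by (auto simp: Rf'_def intro!: sum.cong)
      then show ?thesis using cols jA unfolding s_def by simp
    qed
  next
    fix j assume j: "j \<in> insert b A"
    show "Rf' j j > 0" using j pos nw unfolding Rf'_def by auto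
  next
    fix i assume i: "i \<in> insert b A"
    show "q' i = (\<Sum>l\<in>insert b A. C' l i *\<^sub>R column l S)"
    proof (cases "i = b")
      case True
      have e1: "(\<Sum>l\<in>insert b A. C' l b *\<^sub>R column l S) = C' b b *\<^sub>R s b + (\<Sum>l\<in>A. C' l b *\<^sub>R s l)"
        using finA bA by (simp add: s_def)
      have e2: "(\<Sum>l\<in>A. C' l b *\<^sub>R s l) = (\<Sum>l\<in>A. - ((1 / norm w) *\<^sub>R (d l *\<^sub>R s l)))"
      proof (rule sum.cong[OF refl])
        fix l assume "l \<in> A"
        then have "l \<noteq> b" using bA by auto
        then show "C' l b *\<^sub>R s l = - ((1 / norm w) *\<^sub>R (d l *\<^sub>R s l))"
          unfolding C'_def by simp
      qed
      have e3: "C' b b = 1 / norm w" unfolding C'_def by simp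
      have e4: "(\<Sum>l\<in>insert b A. C' l b *\<^sub>R column l S) = (1 / norm w) *\<^sub>R (s b - (\<Sum>l\<in>A. d l *\<^sub>R s l))"
        unfolding e1 e2 e3 by (simp add: scaleR_diff_right scaleR_sum_right sum_negf)
      have e5: "(1 / norm w) *\<^sub>R (s b - (\<Sum>l\<in>A. d l *\<^sub>R s l)) = q' b"
        unfolding q'b w_def qexp by (simp add: divide_inverse)
      show ?thesis using e4 e5 True by simp
    next
      case False
      then have iA: "i \<in> A" using i by auto
      have f1: "(\<Sum>l\<in>insert b A. C' l i *\<^sub>R column l S) = (\<Sum>l\<in>A. C' l i *\<^sub>R column l S)"
        using finA bA False by (simp add: C'_def)
      have f2: "(\<Sum>l\<in>A. C' l i *\<^sub>R column l S) = (\<Sum>l\<in>A. C l i *\<^sub>R s l)"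
      proof (rule sum.cong[OF refl])
        fix l assume "l \<in> A"
        then have "l \<noteq> b" using bA by auto
        then show "C' l i *\<^sub>R column l S = C l i *\<^sub>R s l" using False unfolding C'_def s_def by simp
      qed
      have f3: "q' i = (\<Sum>l\<in>A. C l i *\<^sub>R s l)" using Cq iA q'A by simp
      show ?thesis unfolding f1 f2 f3 ..
    qed
  qed
qed

lemma QR_exists:
  fixes S :: "real^('n::{finite,linorder})^('n::{finite,linorder})"
  assumes inv: "\<And>x. S *v x = 0 \<Longrightarrow> x = 0"
  obtains Q R where "orthogonal_matrix Q" "upper_triangular R" "\<And>i. R $ i $ i > 0" "S = Q ** R"
proof -
  obtain q Rf C where
    on: "\<forall>i j. q i \<bullet> q j = (if i = j then 1 else 0)" and
    cols: "\<forall>j. column j S = (\<Sum>i\<in>{i. i \<le> j}. Rf i j *\<^sub>R q i)" and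
    pos: "\<forall>j. Rf j j > (0::real)"
    using gram_schmidt_induct[of S UNIV, OF inv] by auto
  define Q where "Q = (\<chi> r c. q c $ r)"
  define R where "R = (\<chi> i j. if i \<le> j then Rf i j else 0)"
  have colQ: "column c Q = q c" for c by (simp add: Q_def column_def vec_eq_iff)
  show ?thesis
  proof
    show "orthogonal_matrix Q" unfolding orthogonal_matrix_orthonormal_columns colQ
      using on by (auto simp: orthogonal_def norm_eq_1)
    show "upper_triangular R" unfolding upper_triangular_def R_def by auto
    show "\<And>i. R $ i $ i > 0" unfolding R_def using pos by auto
    show "S = Q ** R"
    proof (subst vec_eq_iff, intro allI, subst vec_eq_iff, intro allI)
      fix r j
      have "(Q ** R) $ r $ j = (\<Sum>i\<in>UNIV. if i \<le> j then Rf i j * q i $ r else 0)"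
        by (simp add: matrix_matrix_mult_def Q_def R_def if_distrib mult.commute cong: if_cong)
      also have "\<dots> = (\<Sum>i\<in>{i. i \<le> j}. Rf i j * q i $ r)"
        by (simp add: sum.inter_filter[symmetric])
      also have "\<dots> = column j S $ r" using cols by (simp add: sum_component)
      finally show "S $ r $ j = (Q ** R) $ r $ j" by (simp add: column_def)
    qed
  qed
qed

lemma wilk_fun_char:
  fixes T :: "real^('n::{finite,linorder})^('n::{finite,linorder})"
  assumes inv: "\<And>x. (T - wilk_shift T *\<^sub>R mat 1) *v x = 0 \<Longrightarrow> x = 0"
  obtains Q R where "orthogonal_matrix Q" "upper_triangular R" "\<And>i. R $ i $ i > 0"
    "T - wilk_shift T *\<^sub>R mat 1 = Q ** R" "wilk_fun T = transpose Q ** T ** Q"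
proof -
  obtain Q R where QR: "orthogonal_matrix Q" "upper_triangular R" "\<And>i. R $ i $ i > 0"
    "T - wilk_shift T *\<^sub>R mat 1 = Q ** R"
    using QR_exists[OF inv] by blast
  have step: "wilk_QR_step T (transpose Q ** T ** Q)" unfolding wilk_QR_step_def using QR by blast
  have uniq: "W' = transpose Q ** T ** Q" if st: "wilk_QR_step T W'" for W'
  proof -
    obtain Q2 R2 where QR2: "orthogonal_matrix Q2" "upper_triangular R2" "\<And>i. R2 $ i $ i > 0"
      "T - wilk_shift T *\<^sub>R mat 1 = Q2 ** R2" "W' = transpose Q2 ** T ** Q2"
      using st unfolding wilk_QR_step_def by blast
    have "Q2 = Q" by (rule QR_unique[OF QR2(1-3) QR2(4) QR(1-3) QR(4)])
    then show ?thesis using QR2(5) by simp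
  qed
  have "wilk_fun T = transpose Q ** T ** Q" unfolding wilk_fun_def
    using step uniq by (rule the_equality)
  then show ?thesis using that QR by blast
qed

section \<open>TLam is closed and bounded\<close>

lemma TLam_alt:
  fixes lam :: "('n::{finite,linorder}) \<Rightarrow> real"
  assumes inj: "inj lam"
  shows "TLam lam = {T. tridiagonal T} \<inter> (\<Inter>i. {T. \<exists>v. v \<in> sphere 0 1 \<and> T *v v = lam i *\<^sub>R v})"
proof (intro equalityI subsetI)
  fix T assume T: "T \<in> TLam lam"
  obtain V where V: "eigbasis T lam V" using TLam_eigbasis[OF T inj] by blast
  show "T \<in> {T. tridiagonal T} \<inter> (\<Inter>i. {T. \<exists>v. v \<in> sphere 0 1 \<and> T *v v = lam i *\<^sub>R v})"
    using T eigbasis.Vnorm[OF V] eigbasis.Veig[OF V] unfolding TLam_def by auto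
next
  fix T :: "real^('n::{finite,linorder})^('n::{finite,linorder})" assume T: "T \<in> {T. tridiagonal T} \<inter> (\<Inter>i. {T. \<exists>v. v \<in> sphere 0 1 \<and> T *v v = lam i *\<^sub>R v})"
  then have tri: "tridiagonal T" and ex: "\<forall>i. \<exists>v. norm v = 1 \<and> T *v v = lam i *\<^sub>R v" by auto
  then obtain V where Vp: "\<And>i. norm (V i) = 1 \<and> T *v V i = lam i *\<^sub>R V i" by metis
  have V: "eigbasis T lam V" unfolding eigbasis_def using Vp inj tri unfolding tridiagonal_def by auto
  have "{\<mu>. is_eigenvalue T \<mu>} = range lam"
  proof (intro equalityI subsetI)
    fix mu assume "mu \<in> {\<mu>. is_eigenvalue T \<mu>}"
    then obtain v where "v \<noteq> 0" "T *v v = mu *\<^sub>R v" unfolding is_eigenvalue_def by auto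
    then show "mu \<in> range lam" using eigbasis.no_other_eig[OF V] by blast
  next
    fix mu assume "mu \<in> range lam"
    then obtain i where "mu = lam i" by auto
    moreover have "V i \<noteq> 0" using Vp[of i] by auto
    ultimately show "mu \<in> {\<mu>. is_eigenvalue T \<mu>}" unfolding is_eigenvalue_def using Vp by auto
  qed
  then show "T \<in> TLam lam" unfolding TLam_def using tri by auto
qed

lemma cont_entry: "continuous_on UNIV (\<lambda>T::real^'n^'m. T $ i $ j)"
  by (intro continuous_on_component continuous_on_id)

lemma closed_tridiagonal: "closed {T::real^('n::{finite,linorder})^('n::{finite,linorder}). tridiagonal T}"
proof -
  have "{T::real^('n::{finite,linorder})^('n::{finite,linorder}). tridiagonal T} =
     (\<Inter>i. \<Inter>j. {T. T $ i $ j = T $ j $ i} \<inter> {T. T $ i $ j = 0 \<or> i = j \<or> adj_idx i j \<or> adj_idx j i})"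
    unfolding tridiagonal_def by (auto simp: vec_eq_iff transpose_def)
  moreover have "closed {T::real^('n::{finite,linorder})^('n::{finite,linorder}). T $ i $ j = 0 \<or> i = j \<or> adj_idx i j \<or> adj_idx j i}" for i j
  proof (cases "i = j \<or> adj_idx i j \<or> adj_idx j i")
    case True then show ?thesis by simp
  next
    case False then show ?thesis by (simp add: closed_Collect_eq cont_entry)
  qed
  ultimately show ?thesis
    by (auto intro!: closed_INT closed_Int closed_Collect_eq cont_entry)
qed

lemma cont_mv: "continuous_on UNIV (\<lambda>p::(real^'n) \<times> (real^'n^'m). snd p *v fst p)"
  unfolding matrix_vector_mult_def
  by (intro continuous_on_vec_lambda continuous_on_sum continuous_on_mult continuous_on_component
        continuous_on_fst continuous_on_snd continuous_on_id)

lemma closed_eig: "closed {T::real^'n^'n. \<exists>v. v \<in> sphere 0 1 \<and> T *v v = c *\<^sub>R v}"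
proof -
  have "closed {p::(real^'n) \<times> (real^'n^'n). snd p *v fst p = c *\<^sub>R fst p}"
    by (intro closed_Collect_eq cont_mv continuous_on_scaleR continuous_on_const continuous_on_fst continuous_on_id)
  then have "closed {T. \<exists>v. v \<in> sphere (0::real^'n) 1 \<and> (v, T) \<in> {p::(real^'n) \<times> (real^'n^'n). snd p *v fst p = c *\<^sub>R fst p}}"
    by (intro closed_compact_projection compact_sphere)
  then show ?thesis by simp
qed

lemma closed_TLam:
  fixes lam :: "('n::{finite,linorder}) \<Rightarrow> real"
  assumes "inj lam"
  shows "closed (TLam lam)"
  unfolding TLam_alt[OF assms]
  by (intro closed_Int closed_tridiagonal closed_INT closed_eig ballI)

lemma TLam_entry_bound:
  fixes lam :: "('n::{finite,linorder}) \<Rightarrow> real"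
  assumes inj: "inj lam" and T: "T \<in> TLam lam"
  shows "\<bar>T $ i $ j\<bar> \<le> (\<Sum>k\<in>UNIV. \<bar>lam k\<bar>)"
proof -
  obtain V where V: "eigbasis T lam V" using TLam_eigbasis[OF T inj] by blast
  have M: "\<bar>lam k\<bar> \<le> (\<Sum>k\<in>UNIV. \<bar>lam k\<bar>)" for k
    by (rule member_le_sum) auto
  have "\<bar>T $ i $ j\<bar> = \<bar>(T *v axis j 1) $ i\<bar>" by (simp add: mv_axis)
  also have "\<dots> \<le> norm (T *v axis j 1)" by (rule component_le_norm_cart)
  also have "\<dots> \<le> (\<Sum>k\<in>UNIV. \<bar>lam k\<bar>) * norm (axis j (1::real))"
    by (rule eigbasis.norm_apply_le[OF V M])
  finally show ?thesis by (simp add: norm_axis_1)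
qed

lemma bounded_TLam:
  fixes lam :: "('n::{finite,linorder}) \<Rightarrow> real"
  assumes inj: "inj lam"
  shows "bounded (TLam lam)"
proof -
  define M where "M = (\<Sum>k\<in>UNIV. \<bar>lam k\<bar>)"
  have "norm T \<le> real CARD('n) * (real CARD('n) * M)" if T: "T \<in> TLam lam" for T
  proof -
    have "norm T \<le> (\<Sum>i\<in>UNIV. norm (T $ i))" unfolding norm_vec_def by (rule L2_set_le_sum) auto
    also have "\<dots> \<le> (\<Sum>i\<in>(UNIV::'n set). real CARD('n) * M)"
    proof (rule sum_mono)
      fix i
      have "norm (T $ i) \<le> (\<Sum>j\<in>UNIV. \<bar>T $ i $ j\<bar>)" by (rule norm_le_l1_cart)
      also have "\<dots> \<le> (\<Sum>j\<in>(UNIV::'n set). M)"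
        using TLam_entry_bound[OF inj T] unfolding M_def by (intro sum_mono) auto
      finally show "norm (T $ i) \<le> real CARD('n) * M" by simp
    qed
    finally show ?thesis by simp
  qed
  then show ?thesis unfolding bounded_iff by blast
qed

lemma gap_exists:
  fixes lam :: "('n::{finite,linorder}) \<Rightarrow> real"
  assumes card: "CARD(('n::{finite,linorder})) \<ge> 2" and inj: "inj lam"
  obtains g where "g > 0" "\<And>i j. i \<noteq> j \<Longrightarrow> g \<le> \<bar>lam i - lam j\<bar>"
proof -
  define G where "G = (\<lambda>p. \<bar>lam (fst p) - lam (snd p)\<bar>) ` {p::'n \<times> 'n. fst p \<noteq> snd p}"
  have fin: "finite G" unfolding G_def by simp
  have ne: "G \<noteq> {}" unfolding G_def using pen_ne_last[OF card] by auto
  have pos: "\<forall>x\<in>G. x > 0" unfolding G_def using inj by (auto dest: injD)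
  have "Min G > 0" using Min_in[OF fin ne] pos by blast
  moreover have "Min G \<le> \<bar>lam i - lam j\<bar>" if "i \<noteq> j" for i j
    using that fin unfolding G_def by (intro Min_le) (auto intro!: image_eqI[of _ _ "(i, j)"])
  ultimately show ?thesis using that by blast
qed

lemma W_dom_inv:
  fixes T :: "real^('n::{finite,linorder})^('n::{finite,linorder})"
  assumes "T \<in> W_dom lam" "(T - wilk_shift T *\<^sub>R mat 1) *v x = 0"
  shows "x = 0"
proof (rule ccontr)
  assume "x \<noteq> 0"
  moreover have "T *v x = wilk_shift T *\<^sub>R x" using assms(2)
    by (simp add: matrix_vector_mult_diff_rdistrib scaleR_matrix_vector_assoc[symmetric])
  ultimately have "is_eigenvalue T (wilk_shift T)" unfolding is_eigenvalue_def by blast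
  then show False using assms(1) unfolding W_dom_def by simp
qed

lemma dom_bound:
  fixes T :: "real^('n::{finite,linorder})^('n::{finite,linorder})"
  assumes card: "CARD(('n::{finite,linorder})) \<ge> 2" and inj: "inj lam"
    and g: "g > 0" "\<And>i j. i \<noteq> j \<Longrightarrow> g \<le> \<bar>lam i - lam j\<bar>"
    and T: "T \<in> W_dom lam"
  shows "wilk_fun T \<in> TLam lam"
    "\<bar>subd (wilk_fun T)\<bar> \<le> 8 / g * \<bar>subd T\<bar> * (\<bar>subd T\<bar> * (8 / g * \<bar>subd T\<bar>) +
        \<bar>T $ last_idx $ last_idx - wilk_shift T\<bar>)"
proof -
  have TL: "T \<in> TLam lam" using T unfolding W_dom_def by auto
  obtain Q R where QR: "orthogonal_matrix Q" "upper_triangular R" "\<And>i. R $ i $ i > 0"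
    "T - wilk_shift T *\<^sub>R mat 1 = Q ** R" "wilk_fun T = transpose Q ** T ** Q"
    using wilk_fun_char[OF W_dom_inv[OF T]] by blast
  show "wilk_fun T \<in> TLam lam" unfolding QR(5) by (rule W_in_TLam[OF TL QR(1-4)])
  show "\<bar>subd (wilk_fun T)\<bar> \<le> 8 / g * \<bar>subd T\<bar> * (\<bar>subd T\<bar> * (8 / g * \<bar>subd T\<bar>) +
        \<bar>T $ last_idx $ last_idx - wilk_shift T\<bar>)"
    unfolding QR(5) by (rule step_bound[OF card inj TL g wilk_shift_props(1) QR(1,2,4)])
qed

lemma quad_arith:
  fixes K x y :: real
  assumes "K \<ge> 0" "0 \<le> y" "y \<le> x"
  shows "K * x * (x * (K * x) + y) \<le> K * x^2 * (1 + K * x)"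
proof -
  have x0: "x \<ge> 0" using assms by simp
  have "K * x * (x * (K * x) + y) \<le> K * x * (x * (K * x) + x)"
    using assms x0 by (intro mult_left_mono add_left_mono) auto
  also have "\<dots> = K * x^2 * (1 + K * x)" by (simp add: algebra_simps power2_eq_square)
  finally show ?thesis .
qed

lemma removable:
  fixes T :: "real^('n::{finite,linorder})^('n::{finite,linorder})"
  assumes card: "CARD(('n::{finite,linorder})) \<ge> 2" and inj: "inj lam"
    and g: "g > 0" "\<And>i j. i \<noteq> j \<Longrightarrow> g \<le> \<bar>lam i - lam j\<bar>"
    and sub0: "subd T = 0" and lp: "T islimpt W_dom lam"
    and lim: "(wilk_fun \<longlongrightarrow> W') (at T within W_dom lam)"
  shows "W' \<in> TLam lam" "subd W' = 0"
proof -
  define F where "F = at T within W_dom lam"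
  define K where "K = 8 / g"
  have Fnb: "F \<noteq> bot" unfolding F_def using lp trivial_limit_within by blast
  have ev: "eventually (\<lambda>x. x \<in> W_dom lam) F" unfolding F_def eventually_at_filter by simp
  have lim': "(wilk_fun \<longlongrightarrow> W') F" using lim unfolding F_def .
  show "W' \<in> TLam lam"
    by (rule Lim_in_closed_set[OF closed_TLam[OF inj] eventually_mono[OF ev] Fnb lim'])
       (rule dom_bound(1)[OF card inj g])
  have K0: "K \<ge> 0" unfolding K_def using g by simp
  have bnd: "eventually (\<lambda>x. \<bar>subd (wilk_fun x)\<bar> \<le> K * (subd x)^2 * (1 + K * \<bar>subd x\<bar>)) F"
  proof (rule eventually_mono[OF ev])
    fix x assume x: "x \<in> W_dom lam"
    have "\<bar>subd (wilk_fun x)\<bar> \<le> K * \<bar>subd x\<bar> * (\<bar>subd x\<bar> * (K * \<bar>subd x\<bar>) +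
        \<bar>x $ last_idx $ last_idx - wilk_shift x\<bar>)"
      using dom_bound(2)[OF card inj g x] unfolding K_def .
    also have "\<dots> \<le> K * \<bar>subd x\<bar>^2 * (1 + K * \<bar>subd x\<bar>)"
      by (rule quad_arith[OF K0 abs_ge_zero wilk_shift_props(1)])
    finally show "\<bar>subd (wilk_fun x)\<bar> \<le> K * (subd x)^2 * (1 + K * \<bar>subd x\<bar>)" by simp
  qed
  have l1: "((\<lambda>x. \<bar>subd (wilk_fun x)\<bar>) \<longlongrightarrow> \<bar>subd W'\<bar>) F"
    unfolding subd_def by (intro tendsto_rabs tendsto_vec_nth lim')
  have sT: "((\<lambda>x. subd x) \<longlongrightarrow> subd T) F"
    unfolding subd_def F_def by (intro tendsto_vec_nth tendsto_ident_at)
  have l2: "((\<lambda>x. K * (subd x)^2 * (1 + K * \<bar>subd x\<bar>)) \<longlongrightarrow> K * (subd T)^2 * (1 + K * \<bar>subd T\<bar>)) F"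
    by (intro tendsto_intros sT)
  have "\<bar>subd W'\<bar> \<le> K * (subd T)^2 * (1 + K * \<bar>subd T\<bar>)"
    by (rule tendsto_le[OF Fnb l2 l1 bnd])
  then show "subd W' = 0" using sub0 by simp
qed

theorem proposition3p3:
  fixes lam :: "'n::{finite,linorder} \<Rightarrow> real"
  assumes "CARD('n) \<ge> 2"
    and "strict_mono lam"
  shows "\<exists>\<epsilon>q > 0. \<exists>Cq > 0.
     (\<forall>\<epsilon>. 0 < \<epsilon> \<and> \<epsilon> \<le> \<epsilon>q \<longrightarrow>
        (\<forall>T W'. T \<in> Dset lam \<epsilon> \<and> W_defined lam T W' \<longrightarrow> W' \<in> Dset lam \<epsilon>)) \<and>
     (\<forall>T W'. T \<in> Dset lam \<epsilon>q \<and> W_defined lam T W' \<longrightarrow> \<bar>subd W'\<bar> \<le> Cq * \<bar>subd T\<bar>^2) \<and>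
     (\<forall>Dc. Dc \<subseteq> Dset lam \<epsilon>q \<and> closure Dc \<inter> Y0set lam = {} \<longrightarrow>
        (\<exists>Cc > 0. \<forall>T W'. T \<in> Dc \<and> W_defined lam T W' \<longrightarrow> \<bar>subd W'\<bar> \<le> Cc * \<bar>subd T\<bar>^3))"
proof -
  note card = assms(1)
  have inj: "inj lam" using assms(2) by (rule strict_mono_imp_inj_on)
  obtain g where g: "g > 0" "\<And>i j. i \<noteq> j \<Longrightarrow> g \<le> \<bar>lam i - lam j\<bar>"
    using gap_exists[OF card inj] by blast
  define K where "K = 8 / g"
  have K0: "K > 0" unfolding K_def using g by simp
  define Cq where "Cq = K * (1 + K)"
  define eq where "eq = min 1 (1 / Cq)"
  have Cq0: "Cq > 0" unfolding Cq_def using K0 by simp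
  have eq0: "eq > 0" unfolding eq_def using Cq0 by simp
  have eq1: "eq \<le> 1" unfolding eq_def by simp
  have Cqeq: "Cq * eq \<le> 1" unfolding eq_def using Cq0 by (simp add: min_def field_simps)
  have gen: "\<bar>subd (wilk_fun T)\<bar> \<le> K * \<bar>subd T\<bar> * (\<bar>subd T\<bar> * (K * \<bar>subd T\<bar>) +
        \<bar>T $ last_idx $ last_idx - wilk_shift T\<bar>)" if "T \<in> W_dom lam" for T
    using dom_bound(2)[OF card inj g that] unfolding K_def .
  have quad: "\<bar>subd (wilk_fun T)\<bar> \<le> Cq * \<bar>subd T\<bar>^2" if T: "T \<in> W_dom lam" and b1: "\<bar>subd T\<bar> \<le> 1" for T
  proof -
    have "\<bar>subd (wilk_fun T)\<bar> \<le> K * \<bar>subd T\<bar>^2 * (1 + K * \<bar>subd T\<bar>)"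
      using gen[OF T] quad_arith[OF less_imp_le[OF K0] abs_ge_zero wilk_shift_props(1)[of T]] by linarith
    also have "\<dots> \<le> K * \<bar>subd T\<bar>^2 * (1 + K)"
      using K0 b1 by (intro mult_left_mono add_left_mono) (auto simp: mult_le_cancel_left1)
    finally show ?thesis unfolding Cq_def by (simp add: algebra_simps)
  qed
  have rem: "W' \<in> TLam lam \<and> subd W' = 0"
    if "W_defined lam T W'" "T \<notin> W_dom lam \<or> W' \<noteq> wilk_fun T" for T W'
  proof -
    have "T \<in> TLam lam" "subd T = 0" "T islimpt W_dom lam" "(wilk_fun \<longlongrightarrow> W') (at T within W_dom lam)"
      using that unfolding W_defined_def by auto
    then show ?thesis using removable[OF card inj g] by blast
  qed
  have small: "\<bar>subd (wilk_fun T)\<bar> \<le> \<bar>subd T\<bar>" if T: "T \<in> W_dom lam" and b: "\<bar>subd T\<bar> < eq" for T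
  proof -
    have "\<bar>subd (wilk_fun T)\<bar> \<le> Cq * \<bar>subd T\<bar>^2" using quad[OF T] b eq1 by simp
    also have "\<dots> = (Cq * \<bar>subd T\<bar>) * \<bar>subd T\<bar>" by (simp add: power2_eq_square)
    also have "\<dots> \<le> 1 * \<bar>subd T\<bar>"
    proof (rule mult_right_mono)
      have "Cq * \<bar>subd T\<bar> \<le> Cq * eq" using b Cq0 by (intro mult_left_mono) auto
      then show "Cq * \<bar>subd T\<bar> \<le> 1" using Cqeq by linarith
    qed simp
    finally show ?thesis by simp
  qed
  show ?thesis
  proof (rule exI[of _ eq], intro conjI eq0, rule exI[of _ Cq], intro conjI allI impI Cq0)
    fix \<epsilon> T W' assume e: "0 < \<epsilon> \<and> \<epsilon> \<le> eq" and TW: "T \<in> Dset lam \<epsilon> \<and> W_defined lam T W'"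
    show "W' \<in> Dset lam \<epsilon>"
    proof (cases "T \<in> W_dom lam \<and> W' = wilk_fun T")
      case True
      have b: "\<bar>subd T\<bar> < \<epsilon>" using TW unfolding Dset_def by auto
      have "\<bar>subd W'\<bar> \<le> \<bar>subd T\<bar>" using small[of T] True b e by auto
      then show ?thesis using True b dom_bound(1)[OF card inj g] unfolding Dset_def by auto
    next
      case False
      then have "W' \<in> TLam lam \<and> subd W' = 0" using rem TW by blast
      then show ?thesis using e unfolding Dset_def by auto
    qed
  next
    fix T W' assume TW: "T \<in> Dset lam eq \<and> W_defined lam T W'"
    show "\<bar>subd W'\<bar> \<le> Cq * \<bar>subd T\<bar>^2"
    proof (cases "T \<in> W_dom lam \<and> W' = wilk_fun T")
      case True
      have b: "\<bar>subd T\<bar> < eq" using TW unfolding Dset_def by auto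
      then show ?thesis using quad[of T] True eq1 by auto
    next
      case False
      then have "subd W' = 0" using rem TW by blast
      then show ?thesis using Cq0 by simp
    qed
  next
    fix Dc assume Dc: "Dc \<subseteq> Dset lam eq \<and> closure Dc \<inter> Y0set lam = {}"
    show "\<exists>Cc > 0. \<forall>T W'. T \<in> Dc \<and> W_defined lam T W' \<longrightarrow> \<bar>subd W'\<bar> \<le> Cc * \<bar>subd T\<bar>^3"
    proof (cases "Dc = {}")
      case True then show ?thesis by (intro exI[of _ 1]) auto
    next
      case False
      define f where "f = (\<lambda>T::real^('n::{finite,linorder})^('n::{finite,linorder}). \<bar>T $ last_idx $ last_idx - T $ pen_idx $ pen_idx\<bar> + \<bar>subd T\<bar>)"
      have DcT: "Dc \<subseteq> TLam lam" using Dc unfolding Dset_def by auto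
      have clT: "closure Dc \<subseteq> TLam lam" by (rule closure_minimal[OF DcT closed_TLam[OF inj]])
      have cpt: "compact (closure Dc)"
        unfolding compact_eq_bounded_closed
        using bounded_subset[OF bounded_TLam[OF inj] clT] by simp
      have cont: "continuous_on (closure Dc) f" unfolding f_def subd_def
        by (intro continuous_intros continuous_on_component continuous_on_id)
      obtain T0 where T0: "T0 \<in> closure Dc" "\<And>y. y \<in> closure Dc \<Longrightarrow> f T0 \<le> f y"
        using continuous_attains_inf[OF cpt _ cont] False by auto
      define \<delta> where "\<delta> = f T0"
      have \<delta>0: "\<delta> > 0"
      proof (rule ccontr)
        assume "\<not> \<delta> > 0"
        then have "f T0 = 0" unfolding \<delta>_def f_def by auto
        then have "T0 \<in> Y0set lam" using clT T0(1) unfolding f_def Y0set_def by auto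
        then show False using Dc T0(1) by blast
      qed
      define Cc where "Cc = max (Cq * 4 / \<delta>) (K * (K + 2 / \<delta>))"
      have Cc0: "Cc > 0" unfolding Cc_def using Cq0 \<delta>0 by (simp add: less_max_iff_disj)
      show ?thesis
      proof (intro exI[of _ Cc] conjI Cc0 allI impI)
        fix T W' assume TW: "T \<in> Dc \<and> W_defined lam T W'"
        show "\<bar>subd W'\<bar> \<le> Cc * \<bar>subd T\<bar>^3"
        proof (cases "T \<in> W_dom lam \<and> W' = wilk_fun T")
          case False
          then have "subd W' = 0" using rem TW by blast
          then show ?thesis using Cc0 by simp
        next
          case True
          define b where "b = \<bar>subd T\<bar>"
          define a where "a = T $ pen_idx $ pen_idx"
          define c where "c = T $ last_idx $ last_idx"
          define w where "w = wilk_shift T"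
          have b0: "b \<ge> 0" unfolding b_def by simp
          have bq: "b < eq" using TW Dc unfolding b_def Dset_def by auto
          have fT: "\<delta> \<le> \<bar>c - a\<bar> + b" using T0(2)[of T] TW closure_subset
            unfolding \<delta>_def f_def a_def b_def c_def by blast
          have cw: "\<bar>c - w\<bar> \<le> b" unfolding c_def w_def b_def by (rule wilk_shift_props(1))
          have prod: "(a - w) * (c - w) = b^2"
            unfolding a_def c_def w_def b_def using wilk_shift_props(2)[of T] by simp
          have WW: "W' = wilk_fun T" using True by simp
          show ?thesis
          proof (cases "b \<ge> \<delta> / 4")
            case True
            have "\<bar>subd W'\<bar> \<le> Cq * b^2" unfolding WW b_def using quad[of T] \<open>T \<in> W_dom lam \<and> W' = wilk_fun T\<close> bq eq1
              unfolding b_def by auto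
            also have "\<dots> \<le> Cq * b^2 * (4 * b / \<delta>)"
            proof -
              have h: "1 \<le> 4 * b / \<delta>" using True \<delta>0 by (simp add: field_simps)
              show ?thesis using mult_left_mono[OF h, of "Cq * b^2"] Cq0 by simp
            qed
            also have "\<dots> = (Cq * 4 / \<delta>) * b^3" by (simp add: power2_eq_square power3_eq_cube field_simps)
            also have "\<dots> \<le> Cc * b^3" unfolding Cc_def using b0 by (intro mult_right_mono) auto
            finally show ?thesis unfolding b_def .
          next
            case False
            have ac: "\<bar>c - a\<bar> \<ge> 3 * \<delta> / 4" using fT False by linarith
            have aw: "\<bar>a - w\<bar> \<ge> \<delta> / 2" using ac cw False by linarith
            have aw0: "\<bar>a - w\<bar> > 0" using aw \<delta>0 by linarith
            have "\<bar>c - w\<bar> * \<bar>a - w\<bar> = b^2" using prod by (metis abs_mult mult.commute power2_abs abs_power2)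
            then have "\<bar>c - w\<bar> = b^2 / \<bar>a - w\<bar>" using aw0 by (simp add: field_simps)
            also have "\<dots> \<le> b^2 / (\<delta> / 2)" using aw \<delta>0 by (intro divide_left_mono) (auto intro: mult_pos_pos aw0)
            finally have cw2: "\<bar>c - w\<bar> \<le> 2 / \<delta> * b^2" by (simp add: field_simps)
            have "\<bar>subd W'\<bar> \<le> K * b * (b * (K * b) + \<bar>c - w\<bar>)"
              using gen[of T] \<open>T \<in> W_dom lam \<and> W' = wilk_fun T\<close> unfolding b_def c_def w_def by auto
            also have "\<dots> \<le> K * b * (b * (K * b) + 2 / \<delta> * b^2)"
              using K0 b0 cw2 by (intro mult_left_mono add_left_mono) auto
            also have "\<dots> = (K * (K + 2 / \<delta>)) * b^3" by (simp add: power2_eq_square power3_eq_cube algebra_simps)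
            also have "\<dots> \<le> Cc * b^3" unfolding Cc_def using b0 by (intro mult_right_mono) auto
            finally show ?thesis unfolding b_def .
          qed
        qed
      qed
    qed
  qed
qed

end
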